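(* In the setting below (with $\rho\in(r,R)$ fixed) and with $\gamma=(1+\sqrt2)^2$, there is $C>0$ such that for all $N\in\mathbb{N}_0$, \[ \|V_NH_N^\dagger G_NV_N^{-1}-L\|_{\ell^2}\le C\left(\left(\frac{\gamma\rho}{R}\right)^N+\left(\frac{r}{\rho}\right)^N\right). \] In particular, if $\gamma r<R$ and $\rho=\sqrt{rR/\gamma}$, then $\|V_NH_N^\dagger G_NV_N^{-1}-L\|_{\ell^2}\le C'(\gamma r/R)^{N/2}$ for some $C'>0$ and all $N\in\mathbb{N}_0$.
   Context: $T\colon[-1,1]\to[-1,1]$ is an analytic full branch map: closed intervals $I_1,\dots,I_d$ with disjoint interiors covering $[-1,1]$, $T|_{\mathrm{int}(I_\ell)}$ an analytic diffeomorphism with $\overline{T(I_\ell)}=[-1,1]$; inverse branches $\varphi_\ell$ extend to bounded holomorphic functions on $D_R=\{|z|<R\}$ with $\bigcup_\ell\varphi_\ell(D_R)\subseteq D_r$, $1<r<R$. Transfer operator: $(\mathcal{L}f)(z)=\sum_\ell\sigma_\ell\varphi_\ell'(z)f(\varphi_\ell(z))$, $\sigma_\ell=\mathrm{sgn}(\varphi_\ell'(0))$. Fix $\rho\in(r,R)$; $H^2(D_\rho)$ is the Hardy space on $D_\rho$ with orthonormal basis $e_n(z)=(z/\rho)^n$ and inner product $(\cdot,\cdot)$. Operators on $\ell^2(\mathbb{N}_0)$: $L_{k\ell}=(\mathcal{L}e_\ell,e_k)$ (so $L$ is the matrix of $\mathcal{L}$ on $H^2(D_\rho)$); $H_{k\ell}=\frac12\int_{-1}^1x^{k+\ell}dx$;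 $G_{k\ell}=\frac12\int_{-1}^1(T(x))^kx^\ell dx$; $V$, $V^{-1}$ diagonal with entries $\rho^n$, $\rho^{-n}$. $P_N$ is the orthogonal projection onto the first $N$ coordinates; $H_N=P_NHP_N$, $G_N=P_NGP_N$, $V_N=P_NVP_N$, $V_N^{-1}=P_NV^{-1}P_N$; $H_N^\dagger$ is the operator equal to the inverse of the (positive definite) $N\times N$ section of $H_N$ on the range of $P_N$ and $0$ on its orthogonal complement. *)

theory Defs
  imports "HOL-Complex_Analysis.Complex_Analysis"
begin

text \<open>Setting: analytic full branch map T on [-1,1] with branch intervals
  I_l = {a l..b l} (l < d) and inverse branches phi l.\<close>

definition real_analytic_on :: "(real \<Rightarrow> real) \<Rightarrow> real set \<Rightarrow> bool" where
  "real_analytic_on f S \<longleftrightarrow> (\<forall>x\<in>S. \<exists>e>0. \<exists>g. g holomorphic_on ball (complex_of_real x) e \<and>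
      (\<forall>y. \<bar>y - x\<bar> < e \<longrightarrow> g (complex_of_real y) = complex_of_real (f y)))"

definition full_branch_setting ::
  "(real \<Rightarrow> real) \<Rightarrow> nat \<Rightarrow> (nat \<Rightarrow> real) \<Rightarrow> (nat \<Rightarrow> real) \<Rightarrow>
   (nat \<Rightarrow> complex \<Rightarrow> complex) \<Rightarrow> real \<Rightarrow> real \<Rightarrow> bool" where
  "full_branch_setting T d a b \<phi> r R \<longleftrightarrow>
     1 < r \<and> r < R \<and> d \<ge> 1 \<and>
     T ` {-1..1} \<subseteq> {-1..1} \<and>
     (\<Union>l<d. {a l..b l}) = {-1..1} \<and>
     (\<forall>l<d. a l < b l) \<and>
     (\<forall>l<d. \<forall>m<d. l \<noteq> m \<longrightarrow> {a l<..<b l} \<inter> {a m<..<b m} = {}) \<and>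
     (\<forall>l<d. closure (T ` {a l..b l}) = {-1..1}) \<and>
     (\<forall>l<d. inj_on T {a l<..<b l} \<and> real_analytic_on T {a l<..<b l} \<and>
        (\<forall>x\<in>{a l<..<b l}. \<exists>D. (T has_real_derivative D) (at x) \<and> D \<noteq> 0)) \<and>
     (\<forall>l<d. \<phi> l holomorphic_on ball 0 R \<and> bounded (\<phi> l ` ball 0 R) \<and>
        \<phi> l ` ball 0 R \<subseteq> ball 0 r \<and>
        (\<forall>x\<in>{a l<..<b l}. \<phi> l (complex_of_real (T x)) = complex_of_real x))"

text \<open>sigma_l = sgn(phi_l'(0)) (phi_l'(0) is real and nonzero).\<close>
definition branch_sign :: "(complex \<Rightarrow> complex) \<Rightarrow> complex" where
  "branch_sign f = sgn (deriv f 0)"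

definition transfer_op ::
  "nat \<Rightarrow> (nat \<Rightarrow> complex \<Rightarrow> complex) \<Rightarrow> (complex \<Rightarrow> complex) \<Rightarrow> complex \<Rightarrow> complex" where
  "transfer_op d \<phi> f z = (\<Sum>l<d. branch_sign (\<phi> l) * deriv (\<phi> l) z * f (\<phi> l z))"

definition taylor_coeff :: "(complex \<Rightarrow> complex) \<Rightarrow> nat \<Rightarrow> complex" where
  "taylor_coeff f n = (deriv ^^ n) f 0 / of_nat (fact n)"

definition hardy_inner :: "real \<Rightarrow> (complex \<Rightarrow> complex) \<Rightarrow> (complex \<Rightarrow> complex) \<Rightarrow> complex" where
  "hardy_inner \<rho> f g = (\<Sum>n. taylor_coeff f n * cnj (taylor_coeff g n) * of_real (\<rho> ^ (2 * n)))"

definition hardy_basis :: "real \<Rightarrow> nat \<Rightarrow> complex \<Rightarrow> complex" where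
  "hardy_basis \<rho> n z = (z / of_real \<rho>) ^ n"

definition Lmat :: "nat \<Rightarrow> (nat \<Rightarrow> complex \<Rightarrow> complex) \<Rightarrow> real \<Rightarrow> nat \<Rightarrow> nat \<Rightarrow> complex" where
  "Lmat d \<phi> \<rho> k l = hardy_inner \<rho> (transfer_op d \<phi> (hardy_basis \<rho> l)) (hardy_basis \<rho> k)"

definition Hmat :: "nat \<Rightarrow> nat \<Rightarrow> real" where
  "Hmat k l = integral {-1..1} (\<lambda>x::real. x ^ (k + l)) / 2"

definition Gmat :: "(real \<Rightarrow> real) \<Rightarrow> nat \<Rightarrow> nat \<Rightarrow> real" where
  "Gmat T k l = integral {-1..1} (\<lambda>x::real. (T x) ^ k * x ^ l) / 2"

definition Hdag :: "nat \<Rightarrow> nat \<Rightarrow> nat \<Rightarrow> real" where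
  "Hdag N = (THE B. (\<forall>i j. \<not> (i < N \<and> j < N) \<longrightarrow> B i j = 0) \<and>
        (\<forall>i<N. \<forall>k<N. (\<Sum>j<N. Hmat i j * B j k) = (if i = k then 1 else 0)))"

definition approx_mat :: "(real \<Rightarrow> real) \<Rightarrow> real \<Rightarrow> nat \<Rightarrow> nat \<Rightarrow> nat \<Rightarrow> complex" where
  "approx_mat T \<rho> N k l =
     (if k < N \<and> l < N then
        of_real (\<rho> ^ k * (\<Sum>j<N. Hdag N k j * Gmat T j l) * \<rho> powi (- int l))
      else 0)"

text \<open>l^2 operator norm of an infinite matrix (value \<infinity> if unbounded), computed over
  finitely supported unit vectors and finite output truncations.\<close>
definition l2_opnorm :: "(nat \<Rightarrow> nat \<Rightarrow> complex) \<Rightarrow> ennreal" where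
  "l2_opnorm M = (SUP (n, m, x) \<in> {(n, m, x). (\<Sum>j<n. (cmod (x j))\<^sup>2) \<le> 1}.
      ennreal (sqrt (\<Sum>k<m. (cmod (\<Sum>j<n. M k j * x j))\<^sup>2)))"

end

theory Submission
  imports Defs "HOL-Computational_Algebra.Polynomial"
begin


definition ip :: "real poly \<Rightarrow> real poly \<Rightarrow> real" where
  "ip p q = integral {-1..1} (\<lambda>x. poly p x * poly q x) / 2"

lemma poly_int: "(\<lambda>x. poly p x * poly q x) integrable_on {-1..1::real}"
  by (intro integrable_continuous_interval continuous_intros)

lemma poly_int1: "(\<lambda>x. poly p x) integrable_on {-1..1::real}"
  by (intro integrable_continuous_interval continuous_intros)

lemma ip_comm: "ip p q = ip q p"
  unfolding ip_def by (simp add: mult.commute)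

lemma ip_add_left: "ip (p + q) r = ip p r + ip q r"
  unfolding ip_def by (simp add: distrib_right integral_add[OF poly_int poly_int] add_divide_distrib)

lemma ip_smult_left: "ip (smult c p) r = c * ip p r"
  unfolding ip_def by (simp add: mult.assoc)

lemma ip_0_left[simp]: "ip 0 r = 0"
  unfolding ip_def by simp

lemma ip_sum_left: "finite A \<Longrightarrow> ip (\<Sum>n\<in>A. f n) r = (\<Sum>n\<in>A. ip (f n) r)"
  by (induction A rule: finite_induct) (simp_all add: ip_add_left)

lemma integral_pderiv: "integral {-1..1} (\<lambda>x. poly (pderiv p) x) = poly p 1 - poly (p::real poly) (-1)"
proof -
  have "((\<lambda>x. poly (pderiv p) x) has_integral (poly p 1 - poly p (-1))) {-1..1}"
    by (rule fundamental_theorem_of_calculus[of "-1" 1 "poly p" "poly (pderiv p)"])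
       (auto intro!: DERIV_subset[OF poly_DERIV] simp: has_real_derivative_iff_has_vector_derivative[symmetric])
  then show ?thesis by (rule integral_unique)
qed

lemma ip_parts: "ip (pderiv p) q = (poly (p*q) 1 - poly (p*q) (-1)) / 2 - ip p (pderiv q)"
proof -
  have "ip (pderiv p) q + ip p (pderiv q) = integral {-1..1} (\<lambda>x. poly (pderiv (p*q)) x) / 2"
    unfolding ip_def pderiv_mult
    by (simp add: integral_add[OF poly_int poly_int, symmetric] add_divide_distrib[symmetric] algebra_simps)
  moreover have "integral {-1..1} (\<lambda>x. poly (pderiv (p*q)) x) = poly (p*q) 1 - poly (p*q) (-1)"
    by (rule integral_pderiv)
  ultimately show ?thesis by (simp add: field_simps)
qed

definition U :: "nat \<Rightarrow> real poly" where "U n = [:-1,0,1:] ^ n"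
definition Q :: "nat \<Rightarrow> real poly" where "Q n = (pderiv ^^ n) (U n)"

lemma dvd_pderiv_aux:
  assumes "[:c,1:] ^ Suc m dvd p" shows "[:c,1:] ^ m dvd pderiv p"
proof -
  obtain q where p: "p = [:c,1:] ^ Suc m * q" using assms by blast
  have "pderiv p = [:c,1:] ^ m * (smult (of_nat (Suc m)) q + [:c,1:] * pderiv q)"
    unfolding p pderiv_mult pderiv_power_Suc by (simp add: pderiv_pCons algebra_simps)
  then show ?thesis by simp
qed

lemma dvd_higher_pderiv:
  assumes "[:c,1:] ^ n dvd p" "k \<le> n" shows "[:c,1:] ^ (n - k) dvd (pderiv ^^ k) p"
  using assms(2)
proof (induction k)
  case 0 then show ?case using assms(1) by simp
next
  case (Suc k)
  then have "[:c,1:] ^ Suc (n - Suc k) dvd (pderiv ^^ k) p" using Suc_diff_Suc[of k n] by simp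
  then show ?case by (simp add: dvd_pderiv_aux)
qed

lemma U_factor: "U n = [:-1,1:] ^ n * [:1,1:] ^ n"
  unfolding U_def by (simp add: power_mult_distrib[symmetric])

lemma U_vanish:
  assumes "k < n" shows "poly ((pderiv ^^ k) (U n)) 1 = 0" "poly ((pderiv ^^ k) (U n)) (-1) = 0"
proof -
  have "[:-1,1:] ^ (n - k) dvd (pderiv ^^ k) (U n)"
    by (rule dvd_higher_pderiv) (use assms in \<open>auto simp: U_factor\<close>)
  then obtain q where "(pderiv ^^ k) (U n) = [:-1,1:] ^ (n-k) * q" by blast
  then show "poly ((pderiv ^^ k) (U n)) 1 = 0" using assms by simp
  have "[:1,1:] ^ (n - k) dvd (pderiv ^^ k) (U n)"
    by (rule dvd_higher_pderiv) (use assms in \<open>auto simp: U_factor\<close>)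
  then obtain q where "(pderiv ^^ k) (U n) = [:1,1:] ^ (n-k) * q" by blast
  then show "poly ((pderiv ^^ k) (U n)) (-1) = 0" using assms by simp
qed

lemma ip_Q_parts_aux:
  assumes "k \<le> n"
  shows "ip (Q n) p = (-1) ^ k * ip ((pderiv ^^ (n - k)) (U n)) ((pderiv ^^ k) p)"
  using assms
proof (induction k)
  case 0 then show ?case by (simp add: Q_def)
next
  case (Suc k)
  have e: "(pderiv ^^ (n - k)) (U n) = pderiv ((pderiv ^^ (n - Suc k)) (U n))"
    using Suc.prems by (metis Suc_diff_Suc Suc_le_lessD funpow.simps(2) o_apply)
  have lt: "n - Suc k < n" using Suc.prems by simp
  have "ip ((pderiv ^^ (n - k)) (U n)) ((pderiv ^^ k) p) =
        - ip ((pderiv ^^ (n - Suc k)) (U n)) ((pderiv ^^ Suc k) p)"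
    unfolding e ip_parts by (simp add: U_vanish[OF lt])
  then show ?case using Suc by simp
qed

lemma ip_Q_parts: "ip (Q n) p = (-1) ^ n * ip (U n) ((pderiv ^^ n) p)"
  using ip_Q_parts_aux[of n n p] by simp

lemma higher_pderiv_zero:
  assumes "\<forall>i\<ge>n. coeff p i = 0" shows "(pderiv ^^ n) p = 0"
  using assms by (intro poly_eqI) (simp add: coeff_higher_pderiv)

lemma ip_Q_orth:
  assumes "\<forall>i\<ge>n. coeff p i = 0" shows "ip (Q n) p = 0"
  using ip_Q_parts[of n p] higher_pderiv_zero[OF assms] unfolding ip_def by simp


lemma coeff_U_Suc: "coeff (U (Suc n)) j = - coeff (U n) j + (if 2 \<le> j then coeff (U n) (j - 2) else 0)"
proof -
  have "U (Suc n) = smult (-1) (U n) + pCons 0 (pCons 0 (U n))"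
    unfolding U_def by (simp add: algebra_simps)
  then show ?thesis
    by (cases j; cases "j - 1") (auto simp: coeff_pCons' numeral_2_eq_2)
qed

lemma coeff_U_bound: "\<bar>coeff (U n) j\<bar> \<le> 2 ^ n"
proof (induction n arbitrary: j)
  case 0 then show ?case by (simp add: U_def coeff_1)
next
  case (Suc n)
  have "\<bar>coeff (U (Suc n)) j\<bar> \<le> \<bar>coeff (U n) j\<bar> + \<bar>if 2 \<le> j then coeff (U n) (j - 2) else 0\<bar>"
    unfolding coeff_U_Suc by linarith
  also have "\<dots> \<le> 2^n + 2^n" using Suc[of j] Suc[of "j-2"] by (intro add_mono) auto
  finally show ?case by simp
qed

lemma degree_U: "degree (U n) = 2 * n" and lead_U: "coeff (U n) (2 * n) = 1"
proof -
  have d: "degree [:-1,0,1::real:] = 2" by simp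
  show "degree (U n) = 2 * n" unfolding U_def by (subst degree_power_eq) (auto simp: d)
  have "lead_coeff (U n) = 1" unfolding U_def lead_coeff_power by simp
  then show "coeff (U n) (2 * n) = 1" using \<open>degree (U n) = 2 * n\<close> by simp
qed

lemma coeff_U_high: "j > 2 * n \<Longrightarrow> coeff (U n) j = 0"
  using degree_U coeff_eq_0 by metis

definition P :: "nat \<Rightarrow> real" where "P n = pochhammer (of_nat (Suc n)) n"

lemma coeff_Q: "coeff (Q n) i = pochhammer (of_nat (Suc i)) n * coeff (U n) (i + n)"
  unfolding Q_def by (rule coeff_higher_pderiv)

lemma coeff_Q_n: "coeff (Q n) n = P n"
  unfolding coeff_Q P_def using lead_U[of n] by (simp add: mult_2)

lemma coeff_Q_high: "i > n \<Longrightarrow> coeff (Q n) i = 0"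
  unfolding coeff_Q by (simp add: coeff_U_high)

lemma P_pos: "P n > 0"
  unfolding P_def by (intro pochhammer_pos) simp

lemma poch_mono: "i \<le> n \<Longrightarrow> pochhammer (of_nat (Suc i)) n \<le> (P n :: real)"
  unfolding P_def pochhammer_prod by (intro prod_mono) auto

lemma coeff_Q_bound: "\<bar>coeff (Q n) i\<bar> \<le> P n * 2 ^ n"
proof (cases "i \<le> n")
  case True
  have "\<bar>coeff (Q n) i\<bar> = pochhammer (of_nat (Suc i)) n * \<bar>coeff (U n) (i + n)\<bar>"
    unfolding coeff_Q abs_mult by (simp add: pochhammer_nonneg)
  also have "\<dots> \<le> P n * 2 ^ n"
    by (intro mult_mono poch_mono True coeff_U_bound) (auto simp: pochhammer_nonneg P_def)
  finally show ?thesis .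
next
  case False then show ?thesis using P_pos[of n] by (simp add: coeff_Q_high less_imp_le)
qed

lemma higher_pderiv_monom: "(pderiv ^^ n) (monom 1 n) = [:fact n :: real:]"
  by (intro poly_eqI) (auto simp: coeff_higher_pderiv coeff_pCons' pochhammer_fact)

lemma poly_U: "poly (U n) x = (x^2 - 1) ^ n"
  unfolding U_def by (simp add: poly_power power2_eq_square)

definition J :: "nat \<Rightarrow> real" where "J n = integral {-1..1} (\<lambda>x. (1 - x^2) ^ n)"

lemma ip_U_1: "(-1) ^ n * ip (U n) 1 = J n / 2"
proof -
  have "(-1) ^ n * ip (U n) 1 = integral {-1..1} (\<lambda>x. (-1)^n * (x^2 - 1) ^ n) / 2"
    unfolding ip_def poly_U by simp
  also have "(\<lambda>x::real. (-1)^n * (x^2 - 1) ^ n) = (\<lambda>x. (1 - x^2) ^ n)"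
    by (auto simp: power_mult_distrib[symmetric])
  finally show ?thesis unfolding J_def .
qed

lemma Q_split: "Q n = monom (P n) n + (Q n - monom (P n) n)" by simp

lemma h_formula: "ip (Q n) (Q n) = P n * fact n * J n / 2"
proof -
  have z: "ip (Q n) (Q n - monom (P n) n) = 0"
    by (rule ip_Q_orth) (auto simp: coeff_Q_n coeff_Q_high)
  have "ip (Q n) (Q n) = ip (Q n) (monom (P n) n)"
    using ip_add_left[of "monom (P n) n" "Q n - monom (P n) n" "Q n"] z
    by (simp add: ip_comm)
  also have "monom (P n) n = smult (P n) (monom 1 n)" by (simp add: smult_monom)
  also have "ip (Q n) (smult (P n) (monom 1 n)) = P n * ip (Q n) (monom 1 n)"
    by (subst ip_comm, subst ip_smult_left, simp add: ip_comm)
  also have "ip (Q n) (monom 1 n) = (-1) ^ n * ip (U n) [:fact n:]"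
    by (simp add: ip_Q_parts higher_pderiv_monom)
  also have "ip (U n) [:fact n:] = fact n * ip (U n) 1"
    by (simp add: ip_comm[of "U n"] ip_smult_left[symmetric])
  finally show ?thesis using ip_U_1[of n] by (simp add: algebra_simps)
qed

lemma J_lower: "J n \<ge> (3/4) ^ n"
proof -
  have cont: "continuous_on S (\<lambda>x::real. (1 - x^2) ^ n)" for S
    by (intro continuous_intros)
  have "(3/4) ^ n = integral {-1/2..1/2::real} (\<lambda>x. (3/4) ^ n)" by simp
  also have "\<dots> \<le> integral {-1/2..1/2} (\<lambda>x::real. (1 - x^2) ^ n)"
  proof (intro integral_le integrable_continuous_interval cont ballI power_mono)
    fix x :: real assume "x \<in> {-1/2..1/2}"
    then have "\<bar>x\<bar> \<le> \<bar>1/2\<bar>" by auto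
    then have "x^2 \<le> (1/2)^2" using abs_le_square_iff by blast
    then show "3/4 \<le> 1 - x^2" by (simp add: power2_eq_square)
  qed auto
  also have "\<dots> \<le> J n"
    unfolding J_def
  proof (intro integral_subset_le integrable_continuous_interval cont ballI)
    fix x :: real assume "x \<in> {-1..1}"
    then have "x^2 \<le> 1" by (simp add: abs_le_iff power_le_one_iff abs_square_le_1)
    then show "0 \<le> (1 - x^2) ^ n" by simp
  qed auto
  finally show ?thesis .
qed

lemma J_pos: "J n > 0"
proof -
  have "(0::real) < (3/4)^n" by simp
  then show ?thesis using J_lower[of n] by linarith
qed

lemma h_pos: "ip (Q n) (Q n) > 0"
  unfolding h_formula using P_pos J_pos by simp

lemma P_bound: "P n \<le> fact n * 4 ^ n"
proof -
  have f: "fact (n + n) = fact n * P n"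
    unfolding P_def pochhammer_fact pochhammer_product' by (simp add: add.commute)
  have "real ((2*n) choose n) = fact (2*n) / (fact n * fact n)"
    using binomial_fact[of n "2*n"] by simp
  moreover have "real ((2*n) choose n) \<le> 4 ^ n"
  proof -
    have "(2::nat)^(2*n) = 4^n" by (simp add: power_mult)
    then have "((2*n) choose n) \<le> 4^n" using binomial_le_pow2[of "2*n" n] by metis
    then have "real ((2*n) choose n) \<le> real (4^n)" by (rule of_nat_mono)
    then show ?thesis by simp
  qed
  ultimately have "fact (2*n) / (fact n * fact n) \<le> (4::real) ^ n" by simp
  then have "fact (2*n) \<le> (4::real) ^ n * (fact n * fact n)"
    by (simp add: divide_le_eq)
  moreover have "fact (2*n) = (fact (n+n) :: real)" by (simp add: mult_2)
  ultimately have "fact n * P n \<le> fact n * (fact n * 4 ^ n)" using f by (simp only: ac_simps)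
  then show ?thesis by (simp add: mult_le_cancel_left)
qed


definition \<beta> :: real where "\<beta> = sqrt (64/3)"

lemma cs_bound1:
  assumes "\<rho> \<ge> 1"
  shows "(\<Sum>i\<le>n. \<rho> ^ i * \<bar>coeff (Q n) i\<bar>) \<le> real (n+1) * (\<rho> ^ n * (P n * 2 ^ n))"
proof -
  have "(\<Sum>i\<le>n. \<rho> ^ i * \<bar>coeff (Q n) i\<bar>) \<le> (\<Sum>i\<le>n. \<rho> ^ n * (P n * 2 ^ n))"
    using assms by (intro sum_mono mult_mono power_increasing coeff_Q_bound) auto
  then show ?thesis by (simp only: sum_constant card_atMost) simp
qed

lemma cs_bound:
  assumes "\<rho> \<ge> 1"
  shows "(\<Sum>i\<le>n. \<rho> ^ i * \<bar>coeff (Q n) i\<bar>) \<le> sqrt (ip (Q n) (Q n)) * (sqrt 2 * (n+1) * (\<rho> * \<beta>) ^ n)"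
proof -
  define X where "X = (n+1) * (\<rho> ^ n * (P n * 2 ^ n))"
  have X0: "X \<ge> 0" unfolding X_def using P_pos[of n] assms by simp
  have "P n * 4 ^ n \<le> fact n * 4 ^ n * 4 ^ n"
    using P_bound[of n] by (intro mult_right_mono) auto
  also have "\<dots> = fact n * ((3/4) ^ n * (64/3) ^ n)"
    by (simp add: power_mult_distrib[symmetric] mult.assoc)
  also have "\<dots> \<le> fact n * (J n * (64/3) ^ n)"
    using J_lower[of n] by (intro mult_left_mono mult_right_mono) auto
  finally have key: "P n * 4 ^ n \<le> fact n * J n * (64/3) ^ n" by (simp add: mult.assoc)
  have e4: "(4::real)^n = 2^n*2^n" by (simp add: power_mult_distrib[symmetric])
  have er: "\<rho>^(2*n) = \<rho>^n*\<rho>^n" by (simp add: power_add mult_2)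
  have "X^2 = ((n+1)^2 * \<rho>^(2*n) * P n) * (P n * 4 ^ n)"
    unfolding X_def e4 er by (simp add: power2_eq_square algebra_simps)
  also have "\<dots> \<le> ((n+1)^2 * \<rho>^(2*n) * P n) * (fact n * J n * (64/3) ^ n)"
    using P_pos[of n] assms by (intro mult_left_mono key) auto
  also have "\<dots> = ip (Q n) (Q n) * (sqrt 2 * (n+1) * (\<rho> * \<beta>) ^ n)^2"
  proof -
    have b2: "\<beta>^2 = 64/3" unfolding \<beta>_def by simp
    have "(sqrt 2 * (n+1) * (\<rho> * \<beta>) ^ n)^2 = (sqrt 2)^2 * (n+1)^2 * ((\<rho> * \<beta>)^2) ^ n"
      by (simp add: power_mult_distrib power_mult[symmetric] mult.commute)
    also have "\<dots> = 2 * (n+1)^2 * (\<rho>^(2*n) * (64/3)^n)"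
      by (simp add: power_mult_distrib b2 power_mult del: times_divide_eq_right)
    finally show ?thesis unfolding h_formula by (simp add: algebra_simps)
  qed
  finally have "X \<le> sqrt (ip (Q n) (Q n) * (sqrt 2 * (n+1) * (\<rho> * \<beta>) ^ n)^2)"
    by (rule real_le_rsqrt)
  also have "\<dots> = sqrt (ip (Q n) (Q n)) * (sqrt 2 * (n+1) * (\<rho> * \<beta>) ^ n)"
    using assms by (simp add: real_sqrt_mult \<beta>_def)
  finally have A: "X \<le> sqrt (ip (Q n) (Q n)) * (sqrt 2 * (n+1) * (\<rho> * \<beta>) ^ n)" .
  show ?thesis using cs_bound1[OF assms, of n] A unfolding X_def by linarith
qed



abbreviation hh :: "nat \<Rightarrow> real" where "hh n \<equiv> ip (Q n) (Q n)"

lemma ip_Q_Q: "m \<noteq> n \<Longrightarrow> ip (Q m) (Q n) = 0"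
proof (cases "m < n")
  case True
  then have "ip (Q n) (Q m) = 0" by (intro ip_Q_orth) (auto simp: coeff_Q_high)
  then show ?thesis by (simp add: ip_comm)
next
  case False
  assume "m \<noteq> n"
  with False have "n < m" by simp
  then show ?thesis by (intro ip_Q_orth) (auto simp: coeff_Q_high)
qed

lemma ip_sum_right: "finite A \<Longrightarrow> ip r (\<Sum>n\<in>A. f n) = (\<Sum>n\<in>A. ip r (f n))"
  by (simp add: ip_comm[of r] ip_sum_left)

lemma ip_smult_right: "ip r (smult c p) = c * ip r p"
  by (simp add: ip_comm[of r] ip_smult_left)

lemma Hmat_ip: "Hmat i j = ip (monom 1 i) (monom 1 j)"
  unfolding Hmat_def ip_def by (simp add: poly_monom power_add)

lemma Hmat_sym: "Hmat i j = Hmat j i"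
  unfolding Hmat_def by (simp add: add.commute)

lemma poly_monom_sum:
  fixes p :: "real poly"
  assumes "\<forall>i\<ge>N. coeff p i = 0" shows "p = (\<Sum>j<N. smult (coeff p j) (monom 1 j))"
proof (rule poly_eqI)
  fix k
  have "coeff (\<Sum>j<N. smult (coeff p j) (monom 1 j)) k = (\<Sum>j<N. coeff p j * (if j = k then 1 else 0))"
    by (simp add: coeff_sum)
  also have "\<dots> = (\<Sum>j<N. if j = k then coeff p j else 0)" by (intro sum.cong) auto
  also have "\<dots> = coeff p k" using assms by (auto simp: sum.delta not_less)
  finally show "coeff p k = coeff (\<Sum>j<N. smult (coeff p j) (monom 1 j)) k" by simp
qed

lemma sum_H:
  assumes "\<forall>j\<ge>N. coeff q j = 0" shows "(\<Sum>j<N. coeff q j * Hmat j m) = ip q (monom 1 m)"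
proof -
  have "ip q (monom 1 m) = ip (\<Sum>j<N. smult (coeff q j) (monom 1 j)) (monom 1 m)"
    using poly_monom_sum[OF assms] by simp
  also have "\<dots> = (\<Sum>j<N. coeff q j * Hmat j m)"
    by (simp add: ip_sum_left ip_smult_left Hmat_ip)
  finally show ?thesis by simp
qed

lemma expansion:
  "\<forall>i\<ge>N. coeff p i = 0 \<Longrightarrow> p = (\<Sum>n<N. smult (ip p (Q n) / hh n) (Q n))"
proof (induction N arbitrary: p)
  case 0
  then have "p = 0" by (intro poly_eqI) auto
  then show ?case by simp
next
  case (Suc N)
  define \<alpha> where "\<alpha> = coeff p N / P N"
  define p' where "p' = p - smult \<alpha> (Q N)"
  have "\<forall>i\<ge>N. coeff p' i = 0"
  proof safe
    fix i assume "N \<le> i"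
    then consider "i = N" | "i > N" by linarith
    then show "coeff p' i = 0"
      by cases (use Suc.prems P_pos[of N] in \<open>auto simp: p'_def \<alpha>_def coeff_Q_n coeff_Q_high\<close>)
  qed
  from Suc.IH[OF this] have e: "p' = (\<Sum>n<N. smult (ip p' (Q n) / hh n) (Q n))" .
  have ip': "ip p' (Q n) = ip p (Q n)" if "n < N" for n
    using that by (simp add: p'_def ip_add_left[of p "- smult \<alpha> (Q N)", simplified] ip_smult_left ip_Q_Q
       flip: smult_minus_left)
  have p: "p = (\<Sum>n<N. smult (ip p (Q n) / hh n) (Q n)) + smult \<alpha> (Q N)"
    using e ip' unfolding p'_def by (simp add: algebra_simps)
  have "ip p (Q N) = (\<Sum>n<N. ip p (Q n) / hh n * ip (Q n) (Q N)) + \<alpha> * hh N"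
    by (subst p) (simp add: ip_add_left ip_sum_left ip_smult_left)
  also have "\<dots> = \<alpha> * hh N" by (simp add: ip_Q_Q)
  finally have "\<alpha> = ip p (Q N) / hh N" using h_pos[of N] by simp
  then show ?case using p by simp
qed

definition Am :: "nat \<Rightarrow> nat \<Rightarrow> nat \<Rightarrow> real" where
  "Am N i k = (if i < N \<and> k < N then (\<Sum>n<N. coeff (Q n) i * coeff (Q n) k / hh n) else 0)"

lemma Am_sym: "Am N i k = Am N k i"
  unfolding Am_def by (auto simp: mult.commute intro: sum.cong)

lemma Q_coeff_N: "n < N \<Longrightarrow> \<forall>j\<ge>N. coeff (Q n) j = 0"
  by (auto simp: coeff_Q_high)

lemma HA: assumes "i < N" "k < N"
  shows "(\<Sum>j<N. Hmat i j * Am N j k) = (if i = k then 1 else 0)"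
proof -
  have "(\<Sum>j<N. Hmat i j * Am N j k) = (\<Sum>j<N. \<Sum>n<N. coeff (Q n) j * Hmat j i * (coeff (Q n) k / hh n))"
    using assms by (auto simp: Am_def sum_distrib_left Hmat_sym[of i] intro!: sum.cong)
  also have "\<dots> = (\<Sum>n<N. (\<Sum>j<N. coeff (Q n) j * Hmat j i) * (coeff (Q n) k / hh n))"
    by (subst sum.swap) (simp add: sum_distrib_right sum_divide_distrib mult.assoc)
  also have "\<dots> = (\<Sum>n<N. ip (Q n) (monom 1 i) * coeff (Q n) k / hh n)"
    by (intro sum.cong refl) (simp add: sum_H[OF Q_coeff_N])
  also have "\<dots> = coeff (\<Sum>n<N. smult (ip (monom 1 i) (Q n) / hh n) (Q n)) k"
    by (simp add: coeff_sum ip_comm)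
  also have "(\<Sum>n<N. smult (ip (monom 1 i) (Q n) / hh n) (Q n)) = monom 1 i"
    using assms by (intro expansion[symmetric]) auto
  finally show ?thesis by simp
qed

lemma AH: assumes "i < N" "k < N"
  shows "(\<Sum>j<N. Am N i j * Hmat j k) = (if i = k then 1 else 0)"
  using HA[OF assms(2,1)] by (simp add: Am_sym[of N i] Hmat_sym[of _ k] mult.commute eq_commute)

lemma Hdag_eq: "Hdag N = Am N"
  unfolding Hdag_def
proof (rule the_equality)
  show "(\<forall>i j. \<not> (i < N \<and> j < N) \<longrightarrow> Am N i j = 0) \<and>
    (\<forall>i<N. \<forall>k<N. (\<Sum>j<N. Hmat i j * Am N j k) = (if i = k then 1 else 0))"
  proof (intro conjI allI impI)
    fix i j assume "\<not> (i < N \<and> j < N)" then show "Am N i j = 0" unfolding Am_def by auto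
  next
    fix i k assume "i < N" "k < N" then show "(\<Sum>j<N. Hmat i j * Am N j k) = (if i = k then 1 else 0)"
      by (rule HA)
  qed
next
  fix B assume B: "(\<forall>i j. \<not> (i < N \<and> j < N) \<longrightarrow> B i j = 0) \<and>
    (\<forall>i<N. \<forall>k<N. (\<Sum>j<N. Hmat i j * B j k) = (if i = k then 1 else 0))"
  show "B = Am N"
  proof (intro ext)
    fix j k
    show "B j k = Am N j k"
    proof (cases "j < N \<and> k < N")
      case True
      have "Am N j k = (\<Sum>l<N. Am N j l * (if l = k then 1 else 0))"
        using True by (simp add: sum.delta' if_distrib cong: if_cong)
      also have "\<dots> = (\<Sum>l<N. Am N j l * (\<Sum>i<N. Hmat l i * B i k))"
        using B True by (intro sum.cong) auto
      also have "\<dots> = (\<Sum>i<N. (\<Sum>l<N. Am N j l * Hmat l i) * B i k)"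
        by (simp add: sum_distrib_left sum_distrib_right mult.assoc) (rule sum.swap)
      also have "\<dots> = (\<Sum>i<N. (if j = i then 1 else 0) * B i k)"
        using True by (intro sum.cong refl) (simp add: AH)
      also have "\<dots> = (\<Sum>i<N. if j = i then B i k else 0)" by (intro sum.cong) auto
      also have "\<dots> = B j k" using True by simp
      finally show ?thesis by simp
    next
      case False then show ?thesis using B by (auto simp: Am_def)
    qed
  qed
qed


lemma ip_monom_bound:
  assumes pos: "ip q q > 0"
  shows "\<bar>ip q (monom 1 m)\<bar> \<le> sqrt (ip q q)"
proof -
  define t where "t = sqrt (ip q q)"
  have t: "t > 0" using pos unfolding t_def by simp
  have tt: "t * t = ip q q" unfolding t_def using pos by simp
  have "norm (integral {-1..1} (\<lambda>x. poly q x * poly (monom 1 m) x)) \<le>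
        integral {-1..1} (\<lambda>x. (poly q x * poly q x / t + t) / 2)"
  proof (rule integral_norm_bound_integral)
    show "(\<lambda>x. poly q x * poly (monom 1 m) x) integrable_on {-1..1}" by (rule poly_int)
    show "(\<lambda>x. (poly q x * poly q x / t + t) / 2) integrable_on {-1..1::real}"
      using t by (intro integrable_continuous_interval continuous_intros) auto
    fix x :: real assume x: "x \<in> {-1..1}"
    have "\<bar>x\<bar> \<le> 1" using x by auto
    then have "\<bar>x\<bar> ^ m \<le> 1" by (intro power_le_one) auto
    then have "\<bar>x ^ m\<bar> \<le> 1" by (simp add: power_abs)
    then have "\<bar>poly q x * x ^ m\<bar> \<le> \<bar>poly q x\<bar>"
      by (simp add: abs_mult mult_left_le)
    also have "\<bar>poly q x\<bar> \<le> (poly q x * poly q x / t + t) / 2"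
    proof -
      have "0 \<le> (\<bar>poly q x\<bar> - t)^2" by simp
      then have "2 * t * \<bar>poly q x\<bar> \<le> poly q x * poly q x + t * t"
        by (simp add: power2_eq_square algebra_simps abs_mult_self_eq)
      then show ?thesis using t by (simp add: field_simps)
    qed
    finally show "norm (poly q x * poly (monom 1 m) x) \<le> (poly q x * poly q x / t + t) / 2"
      by (simp add: poly_monom)
  qed
  also have "\<dots> = (integral {-1..1} (\<lambda>x. poly q x * poly q x) / t + 2 * t) / 2"
  proof (rule integral_unique)
    have "((\<lambda>x. poly q x * poly q x) has_integral integral {-1..1} (\<lambda>x. poly q x * poly q x)) {-1..1}"
      using poly_int[of q q] by (simp add: integrable_integral)
    then have "((\<lambda>x. poly q x * poly q x / t + t) has_integral (integral {-1..1} (\<lambda>x. poly q x * poly q x) / t + t * 2)) {-1..1}"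
    proof (intro has_integral_add has_integral_divide)
      show "((\<lambda>x. t) has_integral t * 2) {-1..1::real}" using has_integral_const_real[of t "-1" 1] by (simp add: mult.commute)
    qed
    then show "((\<lambda>x. (poly q x * poly q x / t + t) / 2) has_integral (integral {-1..1} (\<lambda>x. poly q x * poly q x) / t + 2 * t) / 2) {-1..1}"
      by (intro has_integral_divide) (simp add: mult.commute)
  qed
  also have "\<dots> = 2 * t"
    using t tt unfolding ip_def by (simp add: field_simps)
  finally show ?thesis unfolding ip_def t_def by simp
qed

lemma WH_formula:
  assumes "k < N"
  shows "(\<Sum>j<N. Am N k j * Hmat j m) = (\<Sum>n<N. coeff (Q n) k * ip (Q n) (monom 1 m) / hh n)"
proof -
  have "(\<Sum>j<N. Am N k j * Hmat j m) = (\<Sum>j<N. \<Sum>n<N. coeff (Q n) k / hh n * (coeff (Q n) j * Hmat j m))"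
    using assms by (intro sum.cong refl) (auto simp: Am_def sum_distrib_right mult.assoc)
  also have "\<dots> = (\<Sum>n<N. coeff (Q n) k / hh n * (\<Sum>j<N. coeff (Q n) j * Hmat j m))"
    by (subst sum.swap) (simp add: sum_distrib_left)
  also have "\<dots> = (\<Sum>n<N. coeff (Q n) k * ip (Q n) (monom 1 m) / hh n)"
    by (intro sum.cong refl) (simp add: sum_H[OF Q_coeff_N])
  finally show ?thesis .
qed

lemma beta_gt1: "\<beta> > 1"
  unfolding \<beta>_def by (simp add: real_less_rsqrt)

lemma WH_bound:
  assumes r1: "\<rho> \<ge> 1"
  shows "(\<Sum>k<N. \<rho> ^ k * \<bar>\<Sum>j<N. Am N k j * Hmat j m\<bar>) \<le> sqrt 2 * N * N * (\<rho> * \<beta>) ^ N"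
proof -
  have "1 * 1 \<le> \<rho> * \<beta>" by (rule mult_mono) (use r1 beta_gt1 in auto)
  then have rb: "\<rho> * \<beta> \<ge> 1" by simp
  have "(\<Sum>k<N. \<rho> ^ k * \<bar>\<Sum>j<N. Am N k j * Hmat j m\<bar>) \<le>
        (\<Sum>k<N. \<Sum>n<N. \<rho> ^ k * \<bar>coeff (Q n) k\<bar> / sqrt (hh n))"
  proof (intro sum_mono)
    fix k assume k: "k \<in> {..<N}"
    have "\<rho> ^ k * \<bar>\<Sum>j<N. Am N k j * Hmat j m\<bar> \<le> \<rho> ^ k * (\<Sum>n<N. \<bar>coeff (Q n) k * ip (Q n) (monom 1 m) / hh n\<bar>)"
    proof -
      have k': "k < N" using k by simp
      have "\<bar>\<Sum>j<N. Am N k j * Hmat j m\<bar> \<le> (\<Sum>n<N. \<bar>coeff (Q n) k * ip (Q n) (monom 1 m) / hh n\<bar>)"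
        unfolding WH_formula[OF k'] by (rule sum_abs)
      then show ?thesis using r1 by (intro mult_left_mono) auto
    qed
    also have "\<dots> \<le> \<rho> ^ k * (\<Sum>n<N. \<bar>coeff (Q n) k\<bar> / sqrt (hh n))"
    proof (intro mult_left_mono sum_mono)
      fix n
      have hp: "hh n > 0" by (rule h_pos)
      have "\<bar>coeff (Q n) k * ip (Q n) (monom 1 m) / hh n\<bar> = \<bar>coeff (Q n) k\<bar> * \<bar>ip (Q n) (monom 1 m)\<bar> / hh n"
        using hp by (simp add: abs_mult)
      also have "\<dots> \<le> \<bar>coeff (Q n) k\<bar> * sqrt (hh n) / hh n"
        using hp by (intro divide_right_mono mult_left_mono ip_monom_bound) auto
      also have "\<dots> = \<bar>coeff (Q n) k\<bar> / sqrt (hh n)"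
        using hp by (simp add: field_simps real_div_sqrt)
      finally show "\<bar>coeff (Q n) k * ip (Q n) (monom 1 m) / hh n\<bar> \<le> \<bar>coeff (Q n) k\<bar> / sqrt (hh n)" .
    qed (use r1 in auto)
    finally show "\<rho> ^ k * \<bar>\<Sum>j<N. Am N k j * Hmat j m\<bar> \<le> (\<Sum>n<N. \<rho> ^ k * \<bar>coeff (Q n) k\<bar> / sqrt (hh n))"
      by (simp add: sum_distrib_left)
  qed
  also have "\<dots> = (\<Sum>n<N. (\<Sum>k<N. \<rho> ^ k * \<bar>coeff (Q n) k\<bar>) / sqrt (hh n))"
    by (subst sum.swap) (simp add: sum_divide_distrib)
  also have "\<dots> \<le> (\<Sum>n<N. sqrt 2 * N * (\<rho> * \<beta>) ^ N)"
  proof (intro sum_mono)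
    fix n assume n: "n \<in> {..<N}"
    have hp: "sqrt (hh n) > 0" using h_pos[of n] by simp
    have "(\<Sum>k<N. \<rho> ^ k * \<bar>coeff (Q n) k\<bar>) = (\<Sum>k\<le>n. \<rho> ^ k * \<bar>coeff (Q n) k\<bar>)"
      using n by (intro sum.mono_neutral_right) (auto simp: coeff_Q_high)
    also have "\<dots> \<le> sqrt (hh n) * (sqrt 2 * (n+1) * (\<rho> * \<beta>) ^ n)"
      by (rule cs_bound[OF r1])
    finally have "(\<Sum>k<N. \<rho> ^ k * \<bar>coeff (Q n) k\<bar>) / sqrt (hh n) \<le> sqrt 2 * (n+1) * (\<rho> * \<beta>) ^ n"
      using hp by (simp add: divide_le_eq mult.commute)
    also have "\<dots> \<le> sqrt 2 * N * (\<rho> * \<beta>) ^ N"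
      using n rb by (intro mult_mono power_increasing) auto
    finally show "(\<Sum>k<N. \<rho> ^ k * \<bar>coeff (Q n) k\<bar>) / sqrt (hh n) \<le> sqrt 2 * N * (\<rho> * \<beta>) ^ N" .
  qed
  also have "\<dots> = sqrt 2 * N * N * (\<rho> * \<beta>) ^ N" by simp
  finally show ?thesis .
qed



definition Fl :: "nat \<Rightarrow> (nat \<Rightarrow> complex \<Rightarrow> complex) \<Rightarrow> nat \<Rightarrow> complex \<Rightarrow> complex" where
  "Fl d \<phi> l = transfer_op d \<phi> (\<lambda>z. z ^ l)"

definition cc :: "nat \<Rightarrow> (nat \<Rightarrow> complex \<Rightarrow> complex) \<Rightarrow> nat \<Rightarrow> nat \<Rightarrow> complex" where
  "cc d \<phi> j l = taylor_coeff (Fl d \<phi> l) j"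

lemma Fl_holo:
  assumes "\<forall>i<d. \<phi> i holomorphic_on ball 0 R"
  shows "Fl d \<phi> l holomorphic_on ball 0 R"
  unfolding Fl_def transfer_op_def using assms
  by (intro holomorphic_intros holomorphic_on_compose[unfolded o_def, of _ _ "\<lambda>z. z ^ l", simplified]) auto

lemma transfer_basis:
  "transfer_op d \<phi> (hardy_basis \<rho> l) = (\<lambda>z. inverse (of_real \<rho>) ^ l * Fl d \<phi> l z)"
  unfolding Fl_def transfer_op_def hardy_basis_def
  by (intro ext) (simp add: sum_distrib_left power_divide field_simps)

lemma taylor_coeff_cmult:
  assumes "f holomorphic_on ball 0 R" "R > 0"
  shows "taylor_coeff (\<lambda>z. c * f z) n = c * taylor_coeff f n"
  unfolding taylor_coeff_def using assms by (simp add: higher_deriv_cmult[of f "ball 0 R"])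

lemma taylor_coeff_basis:
  "taylor_coeff (hardy_basis \<rho> k) n = (if n = k then inverse (of_real \<rho>) ^ k else 0)"
proof -
  have e: "hardy_basis \<rho> k = (\<lambda>z. inverse (of_real \<rho>) ^ k * (z - 0) ^ k)"
    unfolding hardy_basis_def by (intro ext) (simp add: power_divide field_simps)
  have "(deriv ^^ n) (hardy_basis \<rho> k) 0 = inverse (of_real \<rho>) ^ k * (deriv ^^ n) (\<lambda>z. (z - 0) ^ k) 0"
    unfolding e by (rule higher_deriv_cmult[of _ UNIV]) (auto intro: holomorphic_intros)
  also have "\<dots> = inverse (of_real \<rho>) ^ k * (pochhammer (of_nat (Suc k - n)) n * 0 ^ (k - n))"
    by (simp only: higher_deriv_power diff_self)
  finally have *: "(deriv ^^ n) (hardy_basis \<rho> k) 0 = inverse (of_real \<rho>) ^ k * (pochhammer (of_nat (Suc k - n)) n * 0 ^ (k - n))" .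
  show ?thesis
  proof (cases "n = k")
    case True then show ?thesis unfolding taylor_coeff_def * by (simp add: pochhammer_fact[symmetric])
  next
    case False
    then consider "n < k" | "n > k" by linarith
    then show ?thesis
    proof cases
      case 1 then show ?thesis unfolding taylor_coeff_def * by simp
    next
      case 2 then have "Suc k - n = 0" by simp
      then show ?thesis unfolding taylor_coeff_def * using 2 by (simp add: pochhammer_0_left)
    qed
  qed
qed

lemma hardy_inner_basis:
  assumes "\<rho> > 0"
  shows "hardy_inner \<rho> f (hardy_basis \<rho> k) = taylor_coeff f k * of_real \<rho> ^ k"
proof -
  have "(\<lambda>n. taylor_coeff f n * cnj (taylor_coeff (hardy_basis \<rho> k) n) * of_real (\<rho> ^ (2 * n))) =
        (\<lambda>n. if n = k then taylor_coeff f k * of_real \<rho> ^ k else 0)"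
  proof
    fix n show "taylor_coeff f n * cnj (taylor_coeff (hardy_basis \<rho> k) n) * of_real (\<rho> ^ (2 * n)) =
        (if n = k then taylor_coeff f k * of_real \<rho> ^ k else 0)"
    proof (cases "n = k")
      case True
      have "of_real (\<rho> ^ (2 * k)) = (of_real \<rho> ^ k * of_real \<rho> ^ k :: complex)" by (simp add: mult_2 power_add)
      then show ?thesis using True assms by (simp add: taylor_coeff_basis power_inverse field_simps)
    qed (simp add: taylor_coeff_basis)
  qed
  then show ?thesis unfolding hardy_inner_def using sums_single[of k "\<lambda>_. taylor_coeff f k * of_real \<rho> ^ k"]
    by (simp add: sums_iff)
qed

lemma Lmat_eq:
  assumes "\<forall>i<d. \<phi> i holomorphic_on ball 0 R" "R > 0" "\<rho> > 0"
  shows "Lmat d \<phi> \<rho> k l = of_real (\<rho> ^ k / \<rho> ^ l) * cc d \<phi> k l"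
  unfolding Lmat_def hardy_inner_basis[OF assms(3)] transfer_basis cc_def
  using taylor_coeff_cmult[OF Fl_holo[OF assms(1)] assms(2)]
  by (simp add: power_inverse divide_inverse)

lemma deriv_bound:
  assumes holo: "f holomorphic_on ball 0 R" and bnd: "f ` ball 0 R \<subseteq> ball 0 r"
    and t: "t > 0" and z: "norm z + t < R"
  shows "norm (deriv f z) \<le> r / t"
proof -
  have sub: "cball z t \<subseteq> ball 0 R"
  proof
    fix x assume "x \<in> cball z t"
    then have "norm (x - z) \<le> t" by (simp add: dist_norm norm_minus_commute)
    moreover have "norm x \<le> norm z + norm (x - z)" using norm_triangle_ineq[of z "x - z"] by simp
    ultimately show "x \<in> ball 0 R" using z by simp
  qed
  have "norm ((deriv ^^ 1) f z) \<le> fact 1 * r / t ^ 1"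
  proof (rule Cauchy_inequality)
    show "f holomorphic_on ball z t" using holo sub by (meson ball_subset_cball holomorphic_on_subset subset_trans)
    show "continuous_on (cball z t) f" using holo sub
      by (meson holomorphic_on_imp_continuous_on holomorphic_on_subset)
    fix x assume "norm (z - x) = t"
    then have "x \<in> ball 0 R" using sub by (auto simp: dist_norm)
    then have "f x \<in> ball 0 r" using bnd by blast
    then show "norm (f x) \<le> r" by (simp add: dist_norm)
  qed (use t in auto)
  then show ?thesis by simp
qed


lemma Fl_bound:
  assumes holo: "\<forall>i<d. \<phi> i holomorphic_on ball 0 R" and bnd: "\<forall>i<d. \<phi> i ` ball 0 R \<subseteq> ball 0 r"
    and t: "t > 0" and z: "norm z + t < R"
  shows "norm (Fl d \<phi> l z) \<le> d * (r / t) * r ^ l"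
proof -
  have zR: "z \<in> ball 0 R" using z t by simp
  have "norm (Fl d \<phi> l z) \<le> (\<Sum>i<d. norm (branch_sign (\<phi> i) * deriv (\<phi> i) z * \<phi> i z ^ l))"
    unfolding Fl_def transfer_op_def by (rule norm_sum)
  also have "\<dots> \<le> (\<Sum>i<d. 1 * (r / t) * r ^ l)"
  proof (intro sum_mono)
    fix i assume i: "i \<in> {..<d}"
    have s1: "norm (branch_sign (\<phi> i)) \<le> 1" unfolding branch_sign_def by (simp add: norm_sgn)
    have s2: "norm (deriv (\<phi> i) z) \<le> r / t" using i holo bnd t z by (intro deriv_bound) auto
    have "\<phi> i z \<in> ball 0 r" using i bnd zR by blast
    then have s3: "norm (\<phi> i z) \<le> r" by (simp add: dist_norm)
    have r0: "0 \<le> r" using s3 by (meson norm_ge_zero order_trans)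
    have "norm (branch_sign (\<phi> i) * deriv (\<phi> i) z * \<phi> i z ^ l) =
          norm (branch_sign (\<phi> i)) * norm (deriv (\<phi> i) z) * norm (\<phi> i z) ^ l"
      by (simp add: norm_mult norm_power)
    also have "\<dots> \<le> 1 * (r / t) * r ^ l"
      using r0 t by (intro mult_mono power_mono s1 s2 s3) auto
    finally show "norm (branch_sign (\<phi> i) * deriv (\<phi> i) z * \<phi> i z ^ l) \<le> 1 * (r / t) * r ^ l" .
  qed
  finally show ?thesis by simp
qed

lemma cc_bound:
  assumes holo: "\<forall>i<d. \<phi> i holomorphic_on ball 0 R" and bnd: "\<forall>i<d. \<phi> i ` ball 0 R \<subseteq> ball 0 r"
    and s: "0 < s" "s < R"
  shows "norm (cc d \<phi> j l) \<le> d * (r / ((R - s) / 2)) * r ^ l / s ^ j"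
proof -
  define t where "t = (R - s) / 2"
  have t: "t > 0" using s unfolding t_def by simp
  have H: "Fl d \<phi> l holomorphic_on ball 0 R" by (rule Fl_holo[OF holo])
  have "norm ((deriv ^^ j) (Fl d \<phi> l) 0) \<le> fact j * (d * (r / t) * r ^ l) / s ^ j"
  proof (rule Cauchy_inequality)
    show "Fl d \<phi> l holomorphic_on ball 0 s" by (rule holomorphic_on_subset[OF H]) (use s in auto)
    have "cball 0 s \<subseteq> ball (0::complex) R" using s by auto
    then show "continuous_on (cball 0 s) (Fl d \<phi> l)"
      using H by (meson holomorphic_on_imp_continuous_on holomorphic_on_subset)
    fix x :: complex assume "norm (0 - x) = s"
    then have "norm x + t < R" using s unfolding t_def by (simp add: field_simps)
    then show "norm (Fl d \<phi> l x) \<le> d * (r / t) * r ^ l" by (rule Fl_bound[OF holo bnd t])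
  qed (use s in auto)
  then show ?thesis unfolding cc_def taylor_coeff_def t_def
    by (simp add: norm_divide field_simps)
qed

lemma Fl_sums:
  assumes holo: "\<forall>i<d. \<phi> i holomorphic_on ball 0 R" and y: "y \<in> ball 0 R"
  shows "(\<lambda>m. cc d \<phi> m l * y ^ m) sums Fl d \<phi> l y"
  using holomorphic_power_series[OF Fl_holo[OF holo] y] unfolding cc_def taylor_coeff_def by simp



lemma image_covers:
  fixes T :: "real \<Rightarrow> real"
  assumes ab: "a < b" and cont: "continuous_on {a<..<b} T"
    and cl: "closure (T ` {a..b}) = {-1..1}"
  shows "{-1<..<1} \<subseteq> T ` {a<..<b}"
proof
  fix y :: real assume y: "y \<in> {-1<..<1}"
  let ?J = "T ` {a<..<b}"
  have conn: "connected ?J" by (rule connected_continuous_image[OF cont]) simp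
  show "y \<in> ?J"
  proof (rule ccontr)
    assume ny: "y \<notin> ?J"
    have split: "?J \<subseteq> {..<y} \<or> ?J \<subseteq> {y<..}"
    proof (rule ccontr)
      assume "\<not> ?thesis"
      then obtain u v where u: "u \<in> ?J" "\<not> u < y" and v: "v \<in> ?J" "\<not> v > y" by auto
      then have "v \<le> y" "y \<le> u" by auto
      with u v conn have "y \<in> ?J" unfolding connected_iff_interval
        using ny by metis
      with ny show False by simp
    qed
    have img: "T ` {a..b} = ?J \<union> {T a, T b}"
    proof -
      have "{a..b} = {a<..<b} \<union> {a, b}" using ab by auto
      then show ?thesis by auto
    qed
    have eq: "{-1..1} = closure ?J \<union> {T a, T b}"
      using cl unfolding img by (simp add: closure_insert)
    from split show False
    proof
      assume "?J \<subseteq> {..<y}"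
      then have "closure ?J \<subseteq> {..y}"
        by (intro closure_minimal) auto
      then have "{y<..<1} \<subseteq> {T a, T b}"
      proof (intro subsetI)
        fix x assume x: "x \<in> {y<..<1}"
        then have "x \<in> {-1..1}" using y by auto
        then have "x \<in> closure ?J \<union> {T a, T b}" by (simp only: eq)
        moreover have "x \<notin> closure ?J" using \<open>closure ?J \<subseteq> {..y}\<close> x by auto
        ultimately show "x \<in> {T a, T b}" by blast
      qed
      moreover have "infinite {y<..<1}" using y by simp
      ultimately show False using finite_subset by blast
    next
      assume "?J \<subseteq> {y<..}"
      then have "closure ?J \<subseteq> {y..}"
        by (intro closure_minimal) auto
      then have "{-1<..<y} \<subseteq> {T a, T b}"
      proof (intro subsetI)
        fix x assume x: "x \<in> {-1<..<y}"
        then have "x \<in> {-1..1}" using y by auto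
        then have "x \<in> closure ?J \<union> {T a, T b}" by (simp only: eq)
        moreover have "x \<notin> closure ?J" using \<open>closure ?J \<subseteq> {y..}\<close> x by auto
        ultimately show "x \<in> {T a, T b}" by blast
      qed
      moreover have "infinite {-1<..<y}" using y by simp
      ultimately show False using finite_subset by blast
    qed
  qed
qed


lemma open_lebesgue: "open (S :: real set) \<Longrightarrow> S \<in> sets lebesgue"
  by (metis borel_open sets_completionI_sets sets_lborel)

lemma connected_avoid:
  fixes A :: "real set"
  assumes "connected A" "y \<notin> A"
  shows "A \<subseteq> {..<y} \<or> A \<subseteq> {y<..}"
proof (rule ccontr)
  assume "\<not> ?thesis"
  then obtain u v where u: "u \<in> A" "\<not> u < y" and v: "v \<in> A" "\<not> v > y" by auto
  then have "v \<le> y" "y \<le> u" by auto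
  with u v assms(1) have "y \<in> A" unfolding connected_iff_interval by metis
  with assms(2) show False by simp
qed

lemma branch_cov:
  fixes T :: "real \<Rightarrow> real" and \<phi> :: "complex \<Rightarrow> complex"
  assumes ab: "a < b" and sub_ab: "{a..b} \<subseteq> {-1..1}"
    and Tsub: "T ` {-1..1} \<subseteq> {-1..1}"
    and cl: "closure (T ` {a..b}) = {-1..1}"
    and inj: "inj_on T {a<..<b}"
    and der: "\<forall>x\<in>{a<..<b}. \<exists>D. (T has_real_derivative D) (at x) \<and> D \<noteq> 0"
    and holo: "\<phi> holomorphic_on ball 0 R" and R1: "R > 1"
    and inv: "\<forall>x\<in>{a<..<b}. \<phi> (of_real (T x)) = of_real x"
  shows "\<exists>I. ((\<lambda>x. T x ^ j * x ^ l) has_integral I) {a..b} \<and>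
    ((\<lambda>y. of_real y ^ j * (branch_sign \<phi> * deriv \<phi> (of_real y) * \<phi> (of_real y) ^ l)) has_integral of_real I) {-1..1}"
proof -
  define g where "g y = Re (\<phi> (of_real y))" for y
  define g' where "g' y = Re (deriv \<phi> (of_real y))" for y
  define J where "J = T ` {a<..<b}"
  have contT: "continuous_on {a<..<b} T"
  proof (rule continuous_at_imp_continuous_on, rule ballI)
    fix x assume "x \<in> {a<..<b}"
    then obtain D where "(T has_real_derivative D) (at x)" using der by blast
    then show "isCont T x" by (rule DERIV_isCont)
  qed
  have Jsub: "J \<subseteq> {-1..1}" unfolding J_def using sub_ab Tsub by fastforce
  have cover: "{-1<..<1} \<subseteq> J" unfolding J_def by (rule image_covers[OF ab contT cl])
  have phireal: "\<phi> (of_real y) = of_real (g y)" if "y \<in> J" for y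
    using that inv unfolding J_def g_def by auto
  have gT: "g (T x) = x" if "x \<in> {a<..<b}" for x
    using that inv unfolding g_def by simp
  have TgJ: "T (g y) = y" if "y \<in> J" for y
    using that gT unfolding J_def by auto
  have injg: "inj_on g J" unfolding J_def inj_on_def using gT by auto
  have gJ: "g ` J = {a<..<b}" unfolding J_def using gT by (auto simp: image_image)
  have ballR: "of_real y \<in> ball (0::complex) R" if "y \<in> {-1..1}" for y
    using that R1 by (auto simp: dist_norm)
  have gder: "(g has_real_derivative g' y) (at y)" if "y \<in> {-1..1}" for y
  proof -
    have "(\<phi> has_field_derivative deriv \<phi> (of_real y)) (at (of_real y))"
      using holomorphic_derivI[OF holo open_ball ballR[OF that]] .
    then have "((\<lambda>x. \<phi> (of_real x)) has_vector_derivative deriv \<phi> (of_real y)) (at y)"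
      by (rule has_vector_derivative_real_field)
    then show ?thesis unfolding g_def g'_def by (rule has_field_derivative_Re)
  qed
  have holo': "deriv \<phi> holomorphic_on ball 0 R" by (intro holomorphic_deriv holo) simp
  have contg': "continuous_on {-1..1} g'"
  proof -
    have "continuous_on (ball 0 R) (deriv \<phi>)" by (rule holomorphic_on_imp_continuous_on[OF holo'])
    then have "continuous_on {-1..1} (\<lambda>y. deriv \<phi> (of_real y))"
      by (rule continuous_on_compose2[of _ _ _ "of_real"]) (auto intro: continuous_intros ballR)
    then show ?thesis unfolding g'_def by (intro continuous_intros)
  qed
  have contg: "continuous_on {-1..1} g"
  proof -
    have "continuous_on (ball 0 R) \<phi>" by (rule holomorphic_on_imp_continuous_on[OF holo])
    then have "continuous_on {-1..1} (\<lambda>y. \<phi> (of_real y))"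
      by (rule continuous_on_compose2[of _ _ _ "of_real"]) (auto intro: continuous_intros ballR)
    then show ?thesis unfolding g_def by (intro continuous_intros)
  qed
  have dreal: "deriv \<phi> (of_real y) = of_real (g' y)" if y: "y \<in> {-1<..<1}" for y
  proof -
    have "(\<phi> has_field_derivative deriv \<phi> (of_real y)) (at (of_real y))"
      using holomorphic_derivI[OF holo open_ball ballR] y by auto
    then have "((\<lambda>x. \<phi> (of_real x)) has_vector_derivative deriv \<phi> (of_real y)) (at y)"
      by (rule has_vector_derivative_real_field)
    then have d1: "((\<lambda>x. Im (\<phi> (of_real x))) has_real_derivative Im (deriv \<phi> (of_real y))) (at y)"
      by (rule has_field_derivative_Im)
    have "((\<lambda>x. 0) has_real_derivative Im (deriv \<phi> (of_real y))) (at y)"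
      by (rule has_field_derivative_transform_within_open[OF d1, of "{-1<..<1}"])
         (use y cover phireal in auto)
    then have "Im (deriv \<phi> (of_real y)) = 0" using DERIV_const DERIV_unique by blast
    then show ?thesis unfolding g'_def by (simp add: complex_eq_iff)
  qed
  have g'nz: "g' y \<noteq> 0" if y: "y \<in> {-1<..<1}" for y
  proof -
    obtain x where x: "x \<in> {a<..<b}" "y = T x" using y cover unfolding J_def by auto
    obtain D where D: "(T has_real_derivative D) (at x)" "D \<noteq> 0" using der x by blast
    have "T x \<in> {-1..1}" using x y by auto
    then have "((\<lambda>t. g (T t)) has_real_derivative g' (T x) * D) (at x)"
      using DERIV_chain'[OF D(1) gder] by simp
    then have "((\<lambda>t. t) has_real_derivative g' (T x) * D) (at x)"
      by (rule has_field_derivative_transform_within_open[of _ _ _ "{a<..<b}"]) (use x gT in auto)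
    then have "g' (T x) * D = 1" using DERIV_ident DERIV_unique by blast
    then show ?thesis using x by auto
  qed
  have conn: "connected (g' ` {-1<..<1})"
    by (rule connected_continuous_image) (auto intro: continuous_on_subset[OF contg'])
  have "0 \<notin> g' ` {-1<..<1}" using g'nz by auto
  have sgnc: "sgn (g' y) = sgn (g' 0)" if "y \<in> {-1<..<1}" for y
  proof -
    have z: "(0::real) \<in> {-1<..<1}" by simp
    from connected_avoid[OF conn \<open>0 \<notin> _\<close>] show ?thesis
    proof
      assume A: "g' ` {-1<..<1} \<subseteq> {..<0}"
      have "g' y < 0" "g' 0 < 0" using A that z by (auto simp: image_subset_iff)
      then show ?thesis by simp
    next
      assume A: "g' ` {-1<..<1} \<subseteq> {0<..}"
      have "g' y > 0" "g' 0 > 0" using A that z by (auto simp: image_subset_iff)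
      then show ?thesis by simp
    qed
  qed
  have sigma: "branch_sign \<phi> = of_real (sgn (g' 0))"
    unfolding branch_sign_def using dreal[of 0] by (simp add: sgn_of_real)
  have key: "of_real y ^ j * (branch_sign \<phi> * deriv \<phi> (of_real y) * \<phi> (of_real y) ^ l)
      = of_real (\<bar>g' y\<bar> * (y ^ j * g y ^ l))" if y: "y \<in> {-1<..<1}" for y
  proof -
    have "\<bar>g' y\<bar> = sgn (g' 0) * g' y" using sgnc[OF y] by (metis abs_sgn mult.commute)
    moreover have yJ: "y \<in> J" using y cover by auto
    ultimately show ?thesis using y by (simp add: sigma dreal[OF y] phireal[OF yJ])
  qed
  define h where "h y = \<bar>g' y\<bar> * (y ^ j * g y ^ l)" for y
  have conth: "continuous_on {-1..1} h" unfolding h_def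
    by (intro continuous_intros contg contg')
  have hai: "h absolutely_integrable_on {-1..1}" by (rule absolutely_integrable_continuous_real[OF conth])
  have negJ: "negligible {x \<in> {-1..1} - J. h x \<noteq> 0}"
  proof (rule negligible_subset[of "{-1,1}"])
    show "{x \<in> {-1..1} - J. h x \<noteq> 0} \<subseteq> {-1, 1}"
    proof
      fix x assume x: "x \<in> {x \<in> {-1..1} - J. h x \<noteq> 0}"
      show "x \<in> {-1, 1}"
      proof (rule ccontr)
        assume "x \<notin> {-1, 1}"
        with x have "x \<in> {-1<..<1}" by auto
        with cover x show False by auto
      qed
    qed
  qed simp
  have "{x \<in> J - {-1..1}. h x \<noteq> 0} = {}" using Jsub by auto
  then have negJ': "negligible {x \<in> J - {-1..1}. h x \<noteq> 0}" by (metis negligible_empty)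
  have haiJ: "h absolutely_integrable_on J"
    using hai absolutely_integrable_spike_set_eq[OF negJ negJ'] by blast
  have hJ: "integral J h = integral {-1..1} h"
    by (rule integral_spike_set[symmetric, OF negJ negJ'])
  have eqJ: "\<bar>g' y\<bar> * (T (g y) ^ j * g y ^ l) = h y" if "y \<in> J" for y
    using that TgJ unfolding h_def by simp
  have Jleb: "J \<in> sets lebesgue"
  proof -
    have "J = {-1<..<1} \<union> (J \<inter> {-1,1})" using cover Jsub by auto
    moreover have "(J \<inter> {-1,1}) \<in> sets lebesgue" by (rule negligible_imp_sets) (rule negligible_subset[of "{-1,1}"], auto)
    ultimately show ?thesis using open_lebesgue[of "{-1<..<1}"] by (metis open_greaterThanLessThan sets.Un)
  qed
  have derJ: "(g has_real_derivative g' y) (at y within J)" if "y \<in> J" for y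
    using Jsub that by (intro has_field_derivative_at_within[OF gder]) auto
  note CV = has_absolute_integral_change_of_variables_1'[OF Jleb derJ injg, where f = "\<lambda>x. T x ^ j * x ^ l" and b = "integral {-1..1} h"]
  have lhs: "(\<lambda>x. \<bar>g' x\<bar> * (T (g x) ^ j * g x ^ l)) absolutely_integrable_on J \<and>
           integral J (\<lambda>x. \<bar>g' x\<bar> * (T (g x) ^ j * g x ^ l)) = integral {-1..1} h"
  proof
    show "(\<lambda>x. \<bar>g' x\<bar> * (T (g x) ^ j * g x ^ l)) absolutely_integrable_on J"
      by (rule absolutely_integrable_spike[OF haiJ negligible_empty]) (simp add: eqJ)
    have "integral J (\<lambda>x. \<bar>g' x\<bar> * (T (g x) ^ j * g x ^ l)) = integral J h"
      by (rule integral_cong) (simp add: eqJ)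
    then show "integral J (\<lambda>x. \<bar>g' x\<bar> * (T (g x) ^ j * g x ^ l)) = integral {-1..1} h" using hJ by simp
  qed
  with CV gJ have rhs: "(\<lambda>x. T x ^ j * x ^ l) absolutely_integrable_on {a<..<b}"
      "integral {a<..<b} (\<lambda>x. T x ^ j * x ^ l) = integral {-1..1} h" by auto
  have negab: "negligible {x \<in> {a..b} - {a<..<b}. T x ^ j * x ^ l \<noteq> 0}"
    by (rule negligible_subset[of "{a,b}"]) auto
  have "{x \<in> {a<..<b} - {a..b}. T x ^ j * x ^ l \<noteq> 0} = {}" by auto
  then have negab': "negligible {x \<in> {a<..<b} - {a..b}. T x ^ j * x ^ l \<noteq> 0}" by (metis negligible_empty)
  have intab: "(\<lambda>x. T x ^ j * x ^ l) integrable_on {a..b}"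
    using rhs(1) integrable_spike_set[OF _ negab' negab] absolutely_integrable_on_def by blast
  have I1: "((\<lambda>x. T x ^ j * x ^ l) has_integral integral {-1..1} h) {a..b}"
    using integrable_integral[OF intab] integral_spike_set[OF negab negab'] rhs(2) by simp
  have I2: "((\<lambda>y. of_real y ^ j * (branch_sign \<phi> * deriv \<phi> (of_real y) * \<phi> (of_real y) ^ l))
      has_integral of_real (integral {-1..1} h)) {-1..1}"
  proof (rule has_integral_spike[of "{-1,1}"])
    show "negligible {-1, 1::real}" by simp
    show "((\<lambda>y. complex_of_real (h y)) has_integral of_real (integral {-1..1} h)) {-1..1}"
      by (rule has_integral_of_real) (use hai in \<open>simp add: absolutely_integrable_on_def integrable_integral\<close>)
    fix y assume "y \<in> {-1..1} - {-1, 1::real}"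
    then have "y \<in> {-1<..<1}" by auto
    then show "of_real y ^ j * (branch_sign \<phi> * deriv \<phi> (of_real y) * \<phi> (of_real y) ^ l) = of_real (h y)"
      unfolding h_def by (rule key)
  qed
  show ?thesis using I1 I2 by blast
qed


lemma monom_int: "((\<lambda>y::real. complex_of_real y ^ n) has_integral of_real (2 * Hmat j i)) {-1..1}" if "n = j + i"
proof -
  have "((\<lambda>y::real. y ^ (j + i)) has_integral integral {-1..1} (\<lambda>y::real. y ^ (j + i))) {-1..1}"
    by (intro integrable_integral integrable_continuous_interval continuous_intros)
  then have "((\<lambda>y::real. complex_of_real (y ^ (j + i))) has_integral of_real (integral {-1..1} (\<lambda>y::real. y ^ (j + i)))) {-1..1}"
    by (rule has_integral_of_real)
  then show ?thesis using that unfolding Hmat_def by simp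
qed

lemma series_integral:
  assumes holo: "\<forall>i<d. \<phi> i holomorphic_on ball 0 R" and bnd: "\<forall>i<d. \<phi> i ` ball 0 R \<subseteq> ball 0 r"
    and R1: "1 < R"
  shows "(\<lambda>m. of_real (Hmat j m) * cc d \<phi> m l) sums (integral {-1..1} (\<lambda>y. of_real y ^ j * Fl d \<phi> l (of_real y)) / 2)"
proof -
  define s where "s = (1 + R) / 2"
  have s: "1 < s" "s < R" using R1 unfolding s_def by auto
  define K where "K = d * (r / ((R - s) / 2)) * r ^ l"
  have ccb: "norm (cc d \<phi> m l) \<le> K / s ^ m" for m
    unfolding K_def using cc_bound[OF holo bnd, of s m l] s by simp
  define f where "f i y = cc d \<phi> i l * of_real y ^ (j + i)" for i and y :: real
  have fb: "norm (f i y) \<le> K / s ^ i" if "y \<in> {-1..1}" for i y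
  proof -
    have "\<bar>y\<bar> ^ (j + i) \<le> 1" using that by (intro power_le_one) auto
    then have "norm (complex_of_real y ^ (j + i)) \<le> 1" by (simp add: norm_power)
    then have "norm (f i y) \<le> norm (cc d \<phi> i l) * 1" unfolding f_def norm_mult
      by (intro mult_left_mono) auto
    then show ?thesis using ccb[of i] by simp
  qed
  have summ: "summable (\<lambda>i. K / s ^ i)"
  proof -
    have "summable (\<lambda>i. K * (1 / s) ^ i)" using s by (intro summable_mult summable_geometric) auto
    moreover have "(\<lambda>i. K * (1 / s) ^ i) = (\<lambda>i. K / s ^ i)" by (simp add: power_one_over)
    ultimately show ?thesis by simp
  qed
  have UL: "uniform_limit {-1..1} (\<lambda>n y. \<Sum>i<n. f i y) (\<lambda>y. suminf (\<lambda>i. f i y)) sequentially"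
    by (rule Weierstrass_m_test[OF fb summ])
  have cont: "continuous_on {-1..1} (\<lambda>y. \<Sum>i<n. f i y)" for n
    unfolding f_def by (intro continuous_intros)
  obtain I Jv where I: "\<And>n. ((\<lambda>y. \<Sum>i<n. f i y) has_integral I n) {-1..1}"
    and Jv: "((\<lambda>y. suminf (\<lambda>i. f i y)) has_integral Jv) {-1..1}" and lim: "I \<longlonglongrightarrow> Jv"
    using uniform_limit_integral[OF UL cont] by auto
  have In: "I n = (\<Sum>i<n. of_real (2 * Hmat j i) * cc d \<phi> i l)" for n
  proof -
    have "((\<lambda>y. \<Sum>i<n. f i y) has_integral (\<Sum>i<n. cc d \<phi> i l * of_real (2 * Hmat j i))) {-1..1}"
      unfolding f_def by (intro has_integral_sum has_integral_mult_right monom_int) auto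
    then show ?thesis using I[of n] has_integral_unique by (simp add: mult.commute)
  qed
  have sm: "suminf (\<lambda>i. f i y) = of_real y ^ j * Fl d \<phi> l (of_real y)" if "y \<in> {-1..1}" for y
  proof -
    have "of_real y \<in> ball (0::complex) R" using that R1 by (auto simp: dist_norm)
    from sums_mult[OF Fl_sums[OF holo this], of "of_real y ^ j"]
    have "(\<lambda>i. f i y) sums (of_real y ^ j * Fl d \<phi> l (of_real y))"
      unfolding f_def by (simp add: power_add algebra_simps)
    then show ?thesis by (rule sums_unique[symmetric])
  qed
  have "((\<lambda>y. of_real y ^ j * Fl d \<phi> l (of_real y)) has_integral Jv) {-1..1}"
    using Jv by (rule has_integral_eq[rotated]) (simp add: sm)
  then have Jv_eq: "Jv = integral {-1..1} (\<lambda>y. of_real y ^ j * Fl d \<phi> l (of_real y))"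
    by (rule integral_unique[symmetric])
  have "(\<lambda>n. (\<Sum>i<n. of_real (2 * Hmat j i) * cc d \<phi> i l) / 2) \<longlonglongrightarrow> Jv / 2"
    using lim unfolding In by (intro tendsto_divide tendsto_const) auto
  moreover have "(\<Sum>i<n. of_real (2 * Hmat j i) * cc d \<phi> i l) / 2 = (\<Sum>i<n. of_real (Hmat j i) * cc d \<phi> i l)" for n
    by (simp add: sum_divide_distrib)
  ultimately show ?thesis unfolding sums_def Jv_eq by simp
qed


lemma inter_sub:
  fixes a1 b1 a2 b2 :: real
  assumes "a1 < b1" "a2 < b2" "{a1<..<b1} \<inter> {a2<..<b2} = {}"
  shows "{a1..b1} \<inter> {a2..b2} \<subseteq> {a1, b1}"
proof
  fix x assume x: "x \<in> {a1..b1} \<inter> {a2..b2}"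
  show "x \<in> {a1, b1}"
  proof (rule ccontr)
    assume "x \<notin> {a1, b1}"
    with x have x1: "a1 < x" "x < b1" by auto
    define m where "m = (max a1 a2 + min b1 b2) / 2"
    have "max a1 a2 < min b1 b2" using x x1 assms(1,2) by (auto simp: max_def min_def)
    then have "m \<in> {a1<..<b1} \<inter> {a2<..<b2}" unfolding m_def by (auto simp: max_def min_def split: if_splits)
    with assms(3) show False by blast
  qed
qed

lemma G_identity:
  assumes set: "full_branch_setting T d a b \<phi> r R"
  shows "(\<lambda>m. of_real (Hmat j m) * cc d \<phi> m l) sums of_real (Gmat T j l)"
proof -
  note S = set[unfolded full_branch_setting_def]
  have R1: "1 < R" using S by linarith
  have holo: "\<forall>i<d. \<phi> i holomorphic_on ball 0 R" and bnd: "\<forall>i<d. \<phi> i ` ball 0 R \<subseteq> ball 0 r"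
    using S by auto
  have U: "(\<Union>i\<in>{..<d}. {a i..b i}) = {-1..1}" using S by auto
  have "\<forall>i\<in>{..<d}. \<exists>I. ((\<lambda>x. T x ^ j * x ^ l) has_integral I) {a i..b i} \<and>
    ((\<lambda>y. of_real y ^ j * (branch_sign (\<phi> i) * deriv (\<phi> i) (of_real y) * \<phi> i (of_real y) ^ l)) has_integral of_real I) {-1..1}"
  proof
    fix i assume i: "i \<in> {..<d}"
    show "\<exists>I. ((\<lambda>x. T x ^ j * x ^ l) has_integral I) {a i..b i} \<and>
      ((\<lambda>y. of_real y ^ j * (branch_sign (\<phi> i) * deriv (\<phi> i) (of_real y) * \<phi> i (of_real y) ^ l)) has_integral of_real I) {-1..1}"
    proof (rule branch_cov)
      show "a i < b i" using S i by auto
      show "{a i..b i} \<subseteq> {-1..1}" using U i by blast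
      show "T ` {-1..1} \<subseteq> {-1..1}" using S by auto
      show "closure (T ` {a i..b i}) = {-1..1}" using S i by auto
      show "inj_on T {a i<..<b i}" using S i by auto
      show "\<forall>x\<in>{a i<..<b i}. \<exists>D. (T has_real_derivative D) (at x) \<and> D \<noteq> 0" using S i by auto
      show "\<phi> i holomorphic_on ball 0 R" using S i by auto
      show "1 < R" by (rule R1)
      show "\<forall>x\<in>{a i<..<b i}. \<phi> i (of_real (T x)) = of_real x" using S i by auto
    qed
  qed
  from bchoice[OF this] obtain I where I0: "\<forall>i\<in>{..<d}. ((\<lambda>x. T x ^ j * x ^ l) has_integral I i) {a i..b i} \<and>
    ((\<lambda>y. of_real y ^ j * (branch_sign (\<phi> i) * deriv (\<phi> i) (of_real y) * \<phi> i (of_real y) ^ l)) has_integral of_real (I i)) {-1..1}"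
    by blast
  have I1: "((\<lambda>x. T x ^ j * x ^ l) has_integral I i) {a i..b i}" if "i \<in> {..<d}" for i
    using I0 that by blast
  have I2: "((\<lambda>y. of_real y ^ j * (branch_sign (\<phi> i) * deriv (\<phi> i) (of_real y) * \<phi> i (of_real y) ^ l)) has_integral of_real (I i)) {-1..1}" if "i \<in> {..<d}" for i
    using I0 that by blast
  have neg: "pairwise (\<lambda>i i'. negligible ({a i..b i} \<inter> {a i'..b i'})) {..<d}"
  proof (rule pairwiseI)
    fix i i' assume ii: "i \<in> {..<d}" "i' \<in> {..<d}" "i \<noteq> i'"
    have "{a i..b i} \<inter> {a i'..b i'} \<subseteq> {a i, b i}"
      by (rule inter_sub) (use S ii in auto)
    then show "negligible ({a i..b i} \<inter> {a i'..b i'})" by (rule negligible_subset[rotated]) simp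
  qed
  have "((\<lambda>x. T x ^ j * x ^ l) has_integral (\<Sum>i<d. I i)) (\<Union>i\<in>{..<d}. {a i..b i})"
    by (rule has_integral_UN[OF _ I1 neg]) auto
  then have G: "Gmat T j l = (\<Sum>i<d. I i) / 2"
    unfolding Gmat_def U by (simp add: integral_unique)
  have "((\<lambda>y. \<Sum>i<d. of_real y ^ j * (branch_sign (\<phi> i) * deriv (\<phi> i) (of_real y) * \<phi> i (of_real y) ^ l))
     has_integral (\<Sum>i<d. of_real (I i))) {-1..1}"
    by (rule has_integral_sum[OF _ I2]) auto
  moreover have "(\<lambda>y. \<Sum>i<d. of_real y ^ j * (branch_sign (\<phi> i) * deriv (\<phi> i) (of_real y) * \<phi> i (of_real y) ^ l))
      = (\<lambda>y. of_real y ^ j * Fl d \<phi> l (of_real y))"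
    unfolding Fl_def transfer_op_def by (simp add: sum_distrib_left)
  ultimately have "integral {-1..1} (\<lambda>y. of_real y ^ j * Fl d \<phi> l (of_real y)) = of_real (\<Sum>i<d. I i)"
    by (simp add: integral_unique)
  then show ?thesis using series_integral[OF holo bnd R1, of j l] unfolding G by simp
qed



lemma setting_facts:
  assumes "full_branch_setting T d a b \<phi> r R"
  shows "1 < r" "r < R" "\<forall>i<d. \<phi> i holomorphic_on ball 0 R" "\<forall>i<d. \<phi> i ` ball 0 R \<subseteq> ball 0 r"
  using assms unfolding full_branch_setting_def by auto

lemma powi_neg: "(\<rho>::real) powi (- int l) = inverse (\<rho> ^ l)"
  by (simp add: power_int_minus)

lemma block_entry:
  assumes set: "full_branch_setting T d a b \<phi> r R"
    and rho: "r < \<rho>" "\<rho> < R" and s: "\<rho> < s" "s < R" and kl: "k < N" "l < N"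
  shows "norm (approx_mat T \<rho> N k l - Lmat d \<phi> \<rho> k l) \<le>
    (r/\<rho>)^l * ((d * (r / ((R - s) / 2))) * (sqrt 2 * N * N * (\<rho>*\<beta>)^N) * (1/s)^N * (s/(s-1)))"
proof -
  note SF = setting_facts[OF set]
  have r1: "1 < r" by (rule SF(1))
  have rho1: "\<rho> \<ge> 1" "\<rho> > 0" using r1 rho by auto
  have s1: "s > 1" using rho1 s by auto
  define Kc where "Kc = d * (r / ((R - s) / 2))"
  have Kc0: "Kc \<ge> 0" unfolding Kc_def using r1 s by auto
  have ccb: "norm (cc d \<phi> m l) \<le> Kc * r ^ l / s ^ m" for m
    using cc_bound[OF SF(3,4), of s m l] s rho1 unfolding Kc_def by simp
  define WH where "WH m = (\<Sum>j<N. Am N k j * Hmat j m)" for m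
  define BN where "BN = sqrt 2 * N * N * (\<rho>*\<beta>)^N"
  have WHb: "\<rho> ^ k * \<bar>WH m\<bar> \<le> BN" for m
  proof -
    have "\<rho> ^ k * \<bar>WH m\<bar> \<le> (\<Sum>k'<N. \<rho> ^ k' * \<bar>\<Sum>j<N. Am N k' j * Hmat j m\<bar>)"
      unfolding WH_def using kl rho1 by (intro member_le_sum) (auto intro!: mult_nonneg_nonneg)
    also have "\<dots> \<le> BN" unfolding BN_def by (rule WH_bound[OF rho1(1)])
    finally show ?thesis .
  qed
  define S where "S = (\<Sum>j<N. complex_of_real (Am N k j) * of_real (Gmat T j l))"
  have sums1: "(\<lambda>m. of_real (WH m) * cc d \<phi> m l) sums S"
  proof -
    have "(\<lambda>m. \<Sum>j<N. of_real (Am N k j) * (of_real (Hmat j m) * cc d \<phi> m l)) sums S"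
      unfolding S_def by (intro sums_sum sums_mult G_identity[OF set])
    moreover have "(\<lambda>m. \<Sum>j<N. of_real (Am N k j) * (of_real (Hmat j m) * cc d \<phi> m l)) =
                   (\<lambda>m. of_real (WH m) * cc d \<phi> m l)"
      unfolding WH_def by (simp add: sum_distrib_right mult.assoc)
    ultimately show ?thesis by simp
  qed
  have init: "(\<Sum>m<N. of_real (WH m) * cc d \<phi> m l) = cc d \<phi> k l"
  proof -
    have "(\<Sum>m<N. of_real (WH m) * cc d \<phi> m l) = (\<Sum>m<N. if m = k then cc d \<phi> m l else 0)"
      by (intro sum.cong refl) (simp add: WH_def AH[OF kl(1)] eq_commute[of k])
    also have "\<dots> = cc d \<phi> k l" using kl by simp
    finally show ?thesis .
  qed
  have sums2: "(\<lambda>m. of_real (WH (m + N)) * cc d \<phi> (m + N) l) sums (S - cc d \<phi> k l)"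
    using sums_split_initial_segment[OF sums1, of N] init by simp
  define c0 where "c0 = BN / \<rho> ^ k * Kc * r ^ l * (1/s)^N"
  have gs: "(\<lambda>m. c0 * (1/s)^m) sums (c0 * (1 / (1 - 1/s)))"
    using s1 by (intro sums_mult geometric_sums) auto
  have tb: "norm (of_real (WH (m + N)) * cc d \<phi> (m + N) l) \<le> c0 * (1/s)^m" for m
  proof -
    have "norm (of_real (WH (m + N)) * cc d \<phi> (m + N) l) = \<bar>WH (m + N)\<bar> * norm (cc d \<phi> (m + N) l)"
      by (simp add: norm_mult)
    also have "\<dots> \<le> (BN / \<rho> ^ k) * (Kc * r ^ l / s ^ (m + N))"
    proof (intro mult_mono ccb)
      show "\<bar>WH (m + N)\<bar> \<le> BN / \<rho> ^ k" using WHb[of "m + N"] rho1 by (simp add: field_simps)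
      show "0 \<le> BN / \<rho> ^ k" using WHb[of 0] rho1 by (smt (verit) abs_ge_zero divide_nonneg_pos mult_nonneg_nonneg zero_less_power)
    qed auto
    also have "\<dots> = c0 * (1/s)^m" unfolding c0_def by (simp add: power_add field_simps)
    finally show ?thesis .
  qed
  have nb: "norm (S - cc d \<phi> k l) \<le> c0 * (1 / (1 - 1/s))"
    using norm_suminf_le[OF tb sums_summable[OF gs]] sums_unique[OF sums2] sums_unique[OF gs] by simp
  have Sr: "S = of_real (\<Sum>j<N. Hdag N k j * Gmat T j l)" unfolding S_def Hdag_eq by simp
  have "approx_mat T \<rho> N k l - Lmat d \<phi> \<rho> k l = of_real (\<rho> ^ k / \<rho> ^ l) * (S - cc d \<phi> k l)"
  proof -
    have R0: "R > 0" using rho rho1 by linarith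
    show ?thesis
      using kl rho1 unfolding approx_mat_def Lmat_eq[OF SF(3) R0 rho1(2)] Sr powi_neg
      by (simp add: algebra_simps divide_inverse)
  qed
  then have "norm (approx_mat T \<rho> N k l - Lmat d \<phi> \<rho> k l) = (\<rho> ^ k / \<rho> ^ l) * norm (S - cc d \<phi> k l)"
    using rho1 by (simp add: norm_mult norm_divide norm_power)
  also have "\<dots> \<le> (\<rho> ^ k / \<rho> ^ l) * (c0 * (1 / (1 - 1/s)))"
    using rho1 by (intro mult_left_mono nb) auto
  also have "\<dots> = (r/\<rho>)^l * (Kc * BN * (1/s)^N * (s/(s-1)))"
    unfolding c0_def using rho1 s1 by (simp add: field_simps power_divide)
  finally show ?thesis unfolding Kc_def BN_def .
qed


lemma outside_entry:
  assumes set: "full_branch_setting T d a b \<phi> r R"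
    and rho: "r < \<rho>" "\<rho> < R" and s: "\<rho> < s" "s < R" and kl: "\<not> (k < N \<and> l < N)"
  shows "norm (approx_mat T \<rho> N k l - Lmat d \<phi> \<rho> k l) \<le> (d * (r / ((R - s) / 2))) * (\<rho>/s)^k * (r/\<rho>)^l"
proof -
  note SF = setting_facts[OF set]
  have r1: "1 < r" by (rule SF(1))
  have rho1: "\<rho> > 0" using r1 rho by auto
  have R0: "R > 0" using rho rho1 by linarith
  have "norm (approx_mat T \<rho> N k l - Lmat d \<phi> \<rho> k l) = (\<rho> ^ k / \<rho> ^ l) * norm (cc d \<phi> k l)"
  proof -
    have "approx_mat T \<rho> N k l = 0" using kl unfolding approx_mat_def by (simp only: if_False)
    then show ?thesis using rho1 unfolding Lmat_eq[OF SF(3) R0 rho1] by (simp add: norm_mult norm_divide norm_power)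
  qed
  also have "\<dots> \<le> (\<rho> ^ k / \<rho> ^ l) * (d * (r / ((R - s) / 2)) * r ^ l / s ^ k)"
    using rho1 s by (intro mult_left_mono cc_bound[OF SF(3,4)]) auto
  also have "\<dots> = (d * (r / ((R - s) / 2))) * (\<rho>/s)^k * (r/\<rho>)^l"
    using rho1 s by (simp add: power_divide field_simps)
  finally show ?thesis .
qed

lemma geo_tail:
  fixes q :: real
  assumes "0 \<le> q" "q < 1"
  shows "(\<Sum>i<n. if N \<le> i then q ^ i else 0) \<le> q ^ N / (1 - q)"
proof -
  define f where "f i = (if N \<le> i then q ^ i else 0)" for i
  have "(\<lambda>i. q ^ N * q ^ i) sums (q ^ N * (1 / (1 - q)))"
    using assms by (intro sums_mult geometric_sums) auto
  moreover have "(\<lambda>i. f (i + N)) = (\<lambda>i. q ^ N * q ^ i)" unfolding f_def by (auto simp: power_add)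
  ultimately have "(\<lambda>i. f (i + N)) sums (q ^ N / (1 - q))" by simp
  then have "f sums (q ^ N / (1 - q) + (\<Sum>i<N. f i))" by (simp add: sums_iff_shift)
  moreover have "(\<Sum>i<N. f i) = 0" unfolding f_def by simp
  ultimately have fs: "f sums (q ^ N / (1 - q))" by simp
  have "(\<Sum>i<n. f i) \<le> suminf f"
    using assms by (intro sum_le_suminf sums_summable[OF fs]) (auto simp: f_def)
  then show ?thesis using sums_unique[OF fs] unfolding f_def by simp
qed

lemma geo_sum:
  fixes q :: real
  assumes "0 \<le> q" "q < 1"
  shows "(\<Sum>i<n. q ^ i) \<le> 1 / (1 - q)"
  using geo_tail[OF assms, where N=0 and n=n] by simp

lemma opnorm_bound:
  assumes ent: "\<And>k j. norm (M k j) \<le> bnd k j"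
    and sb: "\<And>n m. (\<Sum>k<m. \<Sum>j<n. bnd k j) \<le> B"
  shows "l2_opnorm M \<le> ennreal B"
  unfolding l2_opnorm_def
proof (rule SUP_least, clarify)
  fix n m :: nat and x :: "nat \<Rightarrow> complex"
  assume x: "(\<Sum>j<n. (cmod (x j))\<^sup>2) \<le> 1"
  have x1: "cmod (x j) \<le> 1" if "j < n" for j
  proof -
    have "(cmod (x j))\<^sup>2 \<le> (\<Sum>j<n. (cmod (x j))\<^sup>2)" using that by (intro member_le_sum) auto
    then have "(cmod (x j))\<^sup>2 \<le> 1\<^sup>2" using x by simp
    then show ?thesis by (rule power2_le_imp_le) simp
  qed
  have "sqrt (\<Sum>k<m. (cmod (\<Sum>j<n. M k j * x j))\<^sup>2) = L2_set (\<lambda>k. cmod (\<Sum>j<n. M k j * x j)) {..<m}"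
    unfolding L2_set_def by simp
  also have "\<dots> \<le> (\<Sum>k<m. cmod (\<Sum>j<n. M k j * x j))" by (rule L2_set_le_sum) simp
  also have "\<dots> \<le> (\<Sum>k<m. \<Sum>j<n. bnd k j)"
  proof (intro sum_mono)
    fix k
    have "cmod (\<Sum>j<n. M k j * x j) \<le> (\<Sum>j<n. cmod (M k j * x j))" by (rule norm_sum)
    also have "\<dots> \<le> (\<Sum>j<n. bnd k j)"
    proof (intro sum_mono)
      fix j assume "j \<in> {..<n}"
      then have "cmod (M k j) * cmod (x j) \<le> bnd k j * 1"
        using x1 ent[of k j] by (intro mult_mono) (auto intro: order_trans[OF norm_ge_zero])
      then show "cmod (M k j * x j) \<le> bnd k j" by (simp add: norm_mult)
    qed
    finally show "cmod (\<Sum>j<n. M k j * x j) \<le> (\<Sum>j<n. bnd k j)" .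
  qed
  also have "\<dots> \<le> B" by (rule sb)
  finally show "ennreal (sqrt (\<Sum>k<m. (cmod (\<Sum>j<n. M k j * x j))\<^sup>2)) \<le> ennreal B"
    by (rule ennreal_leI)
qed



lemma poly_geo_bound:
  fixes \<theta> :: real
  assumes "0 \<le> \<theta>" "\<theta> < 1"
  shows "\<exists>C>0. \<forall>N::nat. real N ^ 3 * \<theta> ^ N \<le> C"
proof -
  define t where "t = root 3 \<theta>"
  have t0: "0 \<le> t" unfolding t_def using assms by simp
  have t3: "t ^ 3 = \<theta>" unfolding t_def using assms by simp
  have t1: "t < 1" unfolding t_def using assms by (simp add: real_root_lt_1_iff)
  have "(\<lambda>n. of_nat n * t ^ n) \<longlonglongrightarrow> (0::real)"
    by (rule powser_times_n_limit_0) (use t0 t1 in simp)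
  then have "(\<lambda>n. (of_nat n * t ^ n) ^ 3) \<longlonglongrightarrow> (0::real) ^ 3" by (intro tendsto_power)
  then have "Bseq (\<lambda>n. (of_nat n * t ^ n) ^ 3 :: real)" by (intro convergent_imp_Bseq convergentI)
  then obtain K where K: "K > 0" "\<forall>n. norm ((of_nat n * t ^ n) ^ 3 :: real) \<le> K" by (rule BseqE)
  have "real N ^ 3 * \<theta> ^ N \<le> K" for N
  proof -
    have "real N ^ 3 * \<theta> ^ N = (of_nat N * t ^ N) ^ 3"
      unfolding t3[symmetric] by (simp add: power_mult_distrib power_mult[symmetric] mult.commute)
    also have "\<dots> \<le> K" using K(2)[rule_format, of N] t0 by simp
    finally show ?thesis .
  qed
  then show ?thesis using K(1) by blast
qed

lemma count_bound: "(\<Sum>k<m. if k < N then 1 else 0 :: real) \<le> real N"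
  by (induction m) auto


lemma beta_lt_gamma: "\<beta> < (1 + sqrt 2)\<^sup>2"
proof -
  have "\<beta> < 5" unfolding \<beta>_def by (simp add: real_sqrt_less_iff real_less_lsqrt)
  moreover have "sqrt 2 > (1::real)" by simp
  then have "(1 + sqrt 2)\<^sup>2 > (5::real)" by (simp add: power2_eq_square algebra_simps)
  ultimately show ?thesis by linarith
qed

lemma main_bound:
  assumes set: "full_branch_setting T d a b \<phi> r R"
    and rho: "r < \<rho>" "\<rho> < R"
  shows "\<exists>C>0. \<forall>N::nat. l2_opnorm (\<lambda>k l. approx_mat T \<rho> N k l - Lmat d \<phi> \<rho> k l)
              \<le> ennreal (C * (((1 + sqrt 2)\<^sup>2 * \<rho> / R) ^ N + (r / \<rho>) ^ N))"
proof -
  define \<gamma> :: real where "\<gamma> = (1 + sqrt 2)\<^sup>2"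
  note SF = setting_facts[OF set]
  have r1: "1 < r" by (rule SF(1))
  have rho0: "\<rho> > 0" "\<rho> > 1" using r1 rho by auto
  have R0: "R > 0" using rho rho0 by linarith
  have bg: "\<beta> < \<gamma>" unfolding \<gamma>_def by (rule beta_lt_gamma)
  have b1: "\<beta> > 1" by (rule beta_gt1)
  have g0: "\<gamma> > 0" using bg b1 by linarith
  define s0 where "s0 = max \<rho> (\<beta> * R / \<gamma>)"
  have "\<beta> * R / \<gamma> < R" using bg g0 R0 by (simp add: field_simps)
  then have s0R: "s0 < R" unfolding s0_def using rho by simp
  define s where "s = (s0 + R) / 2"
  have "\<beta> * R / \<gamma> \<le> s0" "\<rho> \<le> s0" unfolding s0_def by auto
  moreover have s2: "2 * s = s0 + R" unfolding s_def by simp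
  moreover have bR: "\<beta> * R / \<gamma> < R" by fact
  ultimately have sa: "\<rho> < s" and sb: "s < R" and sc: "\<beta> * R / \<gamma> < s" using s0R by linarith+
  note s = sa sb sc
  have s1: "s > 1" using s rho0 by linarith
  define \<theta> where "\<theta> = \<beta> * R / (\<gamma> * s)"
  have th0: "0 \<le> \<theta>" unfolding \<theta>_def using b1 R0 g0 s1 by simp
  have th1: "\<theta> < 1" unfolding \<theta>_def using s(3) g0 s1 by (simp add: field_simps)
  obtain C\<theta> where C\<theta>: "C\<theta> > 0" "\<And>N. real N ^ 3 * \<theta> ^ N \<le> C\<theta>"
    using poly_geo_bound[OF th0 th1] by blast
  define Kc where "Kc = d * (r / ((R - s) / 2))"
  have Kc0: "Kc \<ge> 0" unfolding Kc_def using r1 s by auto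
  define q1 where "q1 = r / \<rho>"
  define q2 where "q2 = \<rho> / s"
  have q1: "0 < q1" "q1 < 1" unfolding q1_def using r1 rho rho0 by auto
  have q2: "0 < q2" "q2 < 1" unfolding q2_def using s rho0 by auto
  define Bblk where "Bblk N = Kc * (sqrt 2 * N * N * (\<rho>*\<beta>)^N) * (1/s)^N * (s/(s-1))" for N :: nat
  have Bblk0: "Bblk N \<ge> 0" for N unfolding Bblk_def using Kc0 s1 rho0 b1 by simp
  define A1 where "A1 = Kc * sqrt 2 * (s/(s-1)) / (1 - q1)"
  define A2 where "A2 = Kc / ((1 - q2) * (1 - q1))"
  have A1: "A1 \<ge> 0" unfolding A1_def using Kc0 s1 q1 by simp
  have A2: "A2 \<ge> 0" unfolding A2_def using Kc0 q1 q2 by simp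
  define C where "C = A1 * C\<theta> + A2 + 1"
  have "A1 * C\<theta> \<ge> 0" using A1 C\<theta>(1) by simp
  then have C0: "C > 0" unfolding C_def using A2 by linarith
  have main: "l2_opnorm (\<lambda>k l. approx_mat T \<rho> N k l - Lmat d \<phi> \<rho> k l)
              \<le> ennreal (C * ((\<gamma> * \<rho> / R) ^ N + (r / \<rho>) ^ N))" for N :: nat
  proof -
    define bnd where "bnd k l = (if k < N \<and> l < N then q1 ^ l * Bblk N else 0) +
        Kc * q2 ^ k * q1 ^ l * ((if N \<le> k then 1 else 0) + (if N \<le> l then 1 else 0))" for k l
    have ent: "norm (approx_mat T \<rho> N k l - Lmat d \<phi> \<rho> k l) \<le> bnd k l" for k l
    proof (cases "k < N \<and> l < N")
      case True
      have "norm (approx_mat T \<rho> N k l - Lmat d \<phi> \<rho> k l) \<le> q1 ^ l * Bblk N"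
        using block_entry[OF set rho s(1,2) conjunct1[OF True] conjunct2[OF True]]
        unfolding q1_def Bblk_def Kc_def by simp
      moreover have "0 \<le> Kc * q2 ^ k * q1 ^ l * ((if N \<le> k then 1 else 0) + (if N \<le> l then 1 else 0))"
        using Kc0 q1 q2 by simp
      ultimately show ?thesis unfolding bnd_def using True by simp
    next
      case False
      have "norm (approx_mat T \<rho> N k l - Lmat d \<phi> \<rho> k l) \<le> Kc * q2 ^ k * q1 ^ l"
        using outside_entry[OF set rho s(1,2) False] unfolding q1_def q2_def Kc_def by simp
      moreover have "Kc * q2 ^ k * q1 ^ l \<le> Kc * q2 ^ k * q1 ^ l * ((if N \<le> k then 1 else 0) + (if N \<le> l then 1 else 0))"
        using False Kc0 q1 q2 by (auto intro!: mult_left_mono)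
      moreover have "bnd k l = Kc * q2 ^ k * q1 ^ l * ((if N \<le> k then 1 else 0) + (if N \<le> l then 1 else 0))"
        unfolding bnd_def using False by (subst if_not_P) auto
      ultimately show ?thesis by linarith
    qed
    define Btot where "Btot = real N * (1 / (1 - q1)) * Bblk N + Kc * (q2 ^ N / (1 - q2)) * (1 / (1 - q1))
        + Kc * (1 / (1 - q2)) * (q1 ^ N / (1 - q1))"
    have sb: "(\<Sum>k<m. \<Sum>l<n. bnd k l) \<le> Btot" for n m
    proof -
      define B1 where "B1 k l = (if k < N \<and> l < N then q1 ^ l * Bblk N else 0)" for k l
      define f2 where "f2 k = (if N \<le> k then q2 ^ k else 0)" for k
      define f3 where "f3 l = (if N \<le> l then q1 ^ l else 0)" for l
      have pw: "bnd k l = B1 k l + Kc * (f2 k * q1 ^ l) + Kc * (q2 ^ k * f3 l)" for k l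
        unfolding bnd_def B1_def f2_def f3_def by (auto simp: algebra_simps)
      have e1: "(\<Sum>k<m. \<Sum>l<n. bnd k l) = (\<Sum>k<m. \<Sum>l<n. B1 k l) + (\<Sum>k<m. \<Sum>l<n. Kc * (f2 k * q1 ^ l))
          + (\<Sum>k<m. \<Sum>l<n. Kc * (q2 ^ k * f3 l))"
        by (simp add: pw sum.distrib)
      have e2: "(\<Sum>k<m. \<Sum>l<n. Kc * (f2 k * q1 ^ l)) = Kc * ((\<Sum>k<m. f2 k) * (\<Sum>l<n. q1 ^ l))"
        unfolding sum_product by (simp only: sum_distrib_left)
      have e3: "(\<Sum>k<m. \<Sum>l<n. Kc * (q2 ^ k * f3 l)) = Kc * ((\<Sum>k<m. q2 ^ k) * (\<Sum>l<n. f3 l))"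
        unfolding sum_product by (simp only: sum_distrib_left)
      have e: "(\<Sum>k<m. \<Sum>l<n. bnd k l) =
         (\<Sum>k<m. \<Sum>l<n. (if k < N \<and> l < N then q1 ^ l * Bblk N else 0))
         + Kc * ((\<Sum>k<m. if N \<le> k then q2 ^ k else 0) * (\<Sum>l<n. q1 ^ l))
         + Kc * ((\<Sum>k<m. q2 ^ k) * (\<Sum>l<n. if N \<le> l then q1 ^ l else 0))"
        using e1 e2 e3 unfolding B1_def f2_def f3_def by simp
      have t1: "(\<Sum>k<m. \<Sum>l<n. (if k < N \<and> l < N then q1 ^ l * Bblk N else 0)) \<le> real N * (1 / (1 - q1)) * Bblk N"
      proof -
        have "(\<Sum>k<m. \<Sum>l<n. (if k < N \<and> l < N then q1 ^ l * Bblk N else 0)) \<le>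
              (\<Sum>k<m. \<Sum>l<n. (if k < N then 1 else 0) * (q1 ^ l * Bblk N))"
          using q1 Bblk0 by (intro sum_mono) auto
        also have "\<dots> = (\<Sum>k<m. if k < N then 1 else 0) * ((\<Sum>l<n. q1 ^ l) * Bblk N)"
          by (simp only: sum_distrib_left sum_distrib_right) (rule sum.swap)
        also have "\<dots> \<le> real N * ((1 / (1 - q1)) * Bblk N)"
        proof (intro mult_mono count_bound mult_right_mono geo_sum)
          have "0 \<le> (\<Sum>l<n. q1 ^ l)" using q1 by (intro sum_nonneg) auto
          then show "0 \<le> (\<Sum>l<n. q1 ^ l) * Bblk N" using Bblk0[of N] by simp
        qed (use q1 Bblk0 in auto)
        finally show ?thesis by simp
      qed
      have t2: "Kc * ((\<Sum>k<m. if N \<le> k then q2 ^ k else 0) * (\<Sum>l<n. q1 ^ l)) \<le> Kc * (q2 ^ N / (1 - q2)) * (1 / (1 - q1))"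
        using Kc0 q1 q2 by (simp only: mult.assoc, intro mult_left_mono mult_mono geo_tail geo_sum)
           (auto intro!: sum_nonneg)
      have t3: "Kc * ((\<Sum>k<m. q2 ^ k) * (\<Sum>l<n. if N \<le> l then q1 ^ l else 0)) \<le> Kc * (1 / (1 - q2)) * (q1 ^ N / (1 - q1))"
        using Kc0 q1 q2 by (simp only: mult.assoc, intro mult_left_mono mult_mono geo_tail geo_sum)
           (auto intro!: sum_nonneg)
      show ?thesis unfolding e Btot_def using t1 t2 t3 by linarith
    qed
    have op: "l2_opnorm (\<lambda>k l. approx_mat T \<rho> N k l - Lmat d \<phi> \<rho> k l) \<le> ennreal Btot"
      by (rule opnorm_bound[OF ent sb])
    have Bt: "Btot \<le> C * ((\<gamma> * \<rho> / R) ^ N + (r / \<rho>) ^ N)"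
    proof -
      have eq1: "\<rho> * \<beta> / s = \<theta> * (\<gamma> * \<rho> / R)" unfolding \<theta>_def using g0 R0 s1 by (simp add: field_simps)
      have "real N * (1 / (1 - q1)) * Bblk N = A1 * (real N ^ 3 * (\<rho> * \<beta> / s) ^ N)"
        unfolding A1_def Bblk_def using q1 s1 by (simp add: power_divide field_simps power3_eq_cube)
      also have "\<dots> = A1 * (real N ^ 3 * \<theta> ^ N) * (\<gamma> * \<rho> / R) ^ N"
        unfolding eq1 by (simp only: power_mult_distrib mult.assoc)
      also have "\<dots> \<le> A1 * C\<theta> * (\<gamma> * \<rho> / R) ^ N"
        using A1 C\<theta>(2)[of N] g0 rho0 R0 by (intro mult_right_mono mult_left_mono) auto
      finally have p1: "real N * (1 / (1 - q1)) * Bblk N \<le> A1 * C\<theta> * (\<gamma> * \<rho> / R) ^ N" .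
      have "q2 \<le> \<gamma> * \<rho> / R"
      proof -
        have "R / \<gamma> < s" using s(3) b1 g0 R0 by (smt (verit) divide_right_mono mult_le_cancel_right1)
        then have "R < \<gamma> * s" using g0 by (simp add: field_simps)
        then show ?thesis unfolding q2_def using rho0 s1 R0 g0 by (simp add: field_simps)
      qed
      then have "q2 ^ N \<le> (\<gamma> * \<rho> / R) ^ N" using q2 by (intro power_mono) auto
      then have p2: "Kc * (q2 ^ N / (1 - q2)) * (1 / (1 - q1)) \<le> A2 * (\<gamma> * \<rho> / R) ^ N"
      proof -
        have "Kc * (q2 ^ N / (1 - q2)) * (1 / (1 - q1)) = A2 * q2 ^ N"
          unfolding A2_def using q1 q2 by (simp add: field_simps)
        also have "\<dots> \<le> A2 * (\<gamma> * \<rho> / R) ^ N" by (rule mult_left_mono[OF _ A2]) fact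
        finally show ?thesis .
      qed
      have p3: "Kc * (1 / (1 - q2)) * (q1 ^ N / (1 - q1)) = A2 * (r / \<rho>) ^ N"
        unfolding A2_def q1_def by (simp add: field_simps)
      have pos: "0 \<le> (\<gamma> * \<rho> / R) ^ N" "0 \<le> (r / \<rho>) ^ N" using g0 rho0 R0 r1 by auto
      have "Btot \<le> A1 * C\<theta> * (\<gamma> * \<rho> / R) ^ N + A2 * (\<gamma> * \<rho> / R) ^ N + A2 * (r / \<rho>) ^ N"
        unfolding Btot_def using p1 p2 p3 by linarith
      also have "\<dots> \<le> C * ((\<gamma> * \<rho> / R) ^ N + (r / \<rho>) ^ N)"
        unfolding C_def using pos A1 A2 C\<theta> by (simp add: algebra_simps)
      finally show ?thesis .
    qed
    show ?thesis using op Bt by (meson ennreal_leI order_trans)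
  qed
  show ?thesis using C0 main unfolding \<gamma>_def by blast
qed


theorem proposition11:
  fixes T :: "real \<Rightarrow> real" and d :: nat and a b :: "nat \<Rightarrow> real"
    and \<phi> :: "nat \<Rightarrow> complex \<Rightarrow> complex" and r R \<rho> :: real
  assumes setting: "full_branch_setting T d a b \<phi> r R"
    and rho: "r < \<rho>" "\<rho> < R"
  defines "\<gamma> \<equiv> (1 + sqrt 2)\<^sup>2"
  shows "(\<exists>C>0. \<forall>N::nat.
            l2_opnorm (\<lambda>k l. approx_mat T \<rho> N k l - Lmat d \<phi> \<rho> k l)
              \<le> ennreal (C * ((\<gamma> * \<rho> / R) ^ N + (r / \<rho>) ^ N)))
       \<and> (\<gamma> * r < R \<longrightarrow> \<rho> = sqrt (r * R / \<gamma>) \<longrightarrow>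
           (\<exists>C'>0. \<forall>N::nat.
              l2_opnorm (\<lambda>k l. approx_mat T \<rho> N k l - Lmat d \<phi> \<rho> k l)
                \<le> ennreal (C' * (\<gamma> * r / R) powr (real N / 2))))"
proof -
  have P1: "\<exists>C>0. \<forall>N::nat.
            l2_opnorm (\<lambda>k l. approx_mat T \<rho> N k l - Lmat d \<phi> \<rho> k l)
              \<le> ennreal (C * ((\<gamma> * \<rho> / R) ^ N + (r / \<rho>) ^ N))"
    unfolding \<gamma>_def by (rule main_bound[OF setting rho])
  have P2: "\<exists>C'>0. \<forall>N::nat.
              l2_opnorm (\<lambda>k l. approx_mat T \<rho> N k l - Lmat d \<phi> \<rho> k l)
                \<le> ennreal (C' * (\<gamma> * r / R) powr (real N / 2))"
    if hg: "\<gamma> * r < R" and hr: "\<rho> = sqrt (r * R / \<gamma>)"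
  proof -
    obtain C where C: "C > 0" "\<And>N. l2_opnorm (\<lambda>k l. approx_mat T \<rho> N k l - Lmat d \<phi> \<rho> k l)
              \<le> ennreal (C * ((\<gamma> * \<rho> / R) ^ N + (r / \<rho>) ^ N))" using P1 by blast
    note SF = setting_facts[OF setting]
    have r0: "r > 0" using SF(1) by simp
    have R0: "R > 0" using SF(1,2) by simp
    have s2: "sqrt 2 \<ge> (0::real)" by simp
    then have "1 + sqrt 2 > (0::real)" by linarith
    then have g0: "\<gamma> > 0" unfolding \<gamma>_def by simp
    have rho0: "\<rho> > 0" using rho r0 by simp
    define x where "x = \<gamma> * r / R"
    have x0: "x > 0" unfolding x_def using g0 r0 R0 by simp
    have rho2: "\<rho>\<^sup>2 = r * R / \<gamma>" unfolding hr using r0 R0 g0 by simp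
    have e1: "\<gamma> * \<rho> / R = sqrt x"
    proof -
      have "(\<gamma> * \<rho> / R)\<^sup>2 = x" unfolding x_def power_divide power_mult_distrib rho2
        using g0 R0 by (simp add: power2_eq_square field_simps)
      then show ?thesis using g0 rho0 R0 by (intro real_sqrt_unique[symmetric]) auto
    qed
    have e2: "r / \<rho> = sqrt x"
    proof -
      have "(r / \<rho>)\<^sup>2 = x" unfolding x_def power_divide rho2
        using g0 R0 r0 by (simp add: power2_eq_square field_simps)
      then show ?thesis using r0 rho0 by (intro real_sqrt_unique[symmetric]) auto
    qed
    have ep: "x powr (real N / 2) = sqrt x ^ N" for N :: nat
    proof -
      have "x powr (real N / 2) = (x powr (1/2)) powr real N" by (simp add: powr_powr)
      also have "\<dots> = sqrt x powr real N" using x0 by (simp add: powr_half_sqrt)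
      also have "\<dots> = sqrt x ^ N" using x0 by (simp add: powr_realpow)
      finally show ?thesis .
    qed
    have "l2_opnorm (\<lambda>k l. approx_mat T \<rho> N k l - Lmat d \<phi> \<rho> k l)
                \<le> ennreal ((2 * C) * (\<gamma> * r / R) powr (real N / 2))" for N :: nat
      using C(2)[of N] unfolding e1 e2 ep[of N, unfolded x_def, symmetric] x_def[symmetric] ep[of N]
      by (simp add: algebra_simps)
    then show ?thesis using C(1) by (intro exI[of _ "2 * C"]) auto
  qed
  show ?thesis using P1 P2 by blast
qed


end
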